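(* Let $N\geq2$ and $0<s\leq1$ with $2s<N$. Define, for real $t$, $\Phi(t):=|\mathbb{S}^{N-2}|\int_{-1}^1\frac{(1-u^2)^{\frac{N-3}{2}}}{(1+t^2-2tu)^{N/2-s}}du$, with the convention $|\mathbb{S}^0|=2$. Then: (i) $\Phi:(-1,1)\to\mathbb{R}_+$ is analytic. (ii) There exist smooth functions $\phi_1,\phi_2:(0,\sqrt2)\to\mathbb{R}$ such that for all $t\in(0,1)$, $\Phi(t)=\phi_1(t)+K_{2s}(1-t)\phi_2(t)$, where $K_{2s}(t)=|t|^{2s-1}$ if $s\neq1/2$ and $K_{2s}(t)=\log|t|$ if $s=1/2$. (iii) For all $t>0$, $\Phi(t^{-1})=t^{N-2s}\Phi(t)$.
   Context: $|\mathbb{S}^{N-2}|$ denotes the surface measure of the unit sphere in $\mathbb{R}^{N-1}$. *)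

theory Defs
  imports "HOL-Analysis.Analysis"
begin

text \<open>Surface measure of the unit sphere S^(n-1) in R^n: 2 pi^(n/2) / Gamma(n/2).
  For n = 1 this gives 2, i.e. the convention |S^0| = 2.\<close>
definition sphere_measure :: "nat \<Rightarrow> real" where
  "sphere_measure n = 2 * pi powr (real n / 2) / Gamma (real n / 2)"

definition Phi :: "nat \<Rightarrow> real \<Rightarrow> real \<Rightarrow> real" where
  "Phi N s t = sphere_measure (N - 1) *
     integral {-1..1} (\<lambda>u. (1 - u\<^sup>2) powr ((real N - 3) / 2)
                          / (1 + t\<^sup>2 - 2 * t * u) powr (real N / 2 - s))"

definition real_analytic_on :: "(real \<Rightarrow> real) \<Rightarrow> real set \<Rightarrow> bool" where
  "real_analytic_on f S \<longleftrightarrow>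
     (\<forall>x0\<in>S. \<exists>r>0. \<exists>a::nat \<Rightarrow> real.
        \<forall>x. \<bar>x - x0\<bar> < r \<longrightarrow> (\<lambda>n. a n * (x - x0) ^ n) sums f x)"

definition smooth_on :: "(real \<Rightarrow> real) \<Rightarrow> real set \<Rightarrow> bool" where
  "smooth_on f S \<longleftrightarrow>
     (\<exists>D :: nat \<Rightarrow> real \<Rightarrow> real. D 0 = f \<and>
        (\<forall>n. \<forall>x\<in>S. (D n has_real_derivative D (Suc n) x) (at x)))"

definition K :: "real \<Rightarrow> real \<Rightarrow> real" where
  "K s t = (if s = 1/2 then ln \<bar>t\<bar> else \<bar>t\<bar> powr (2 * s - 1))"

end

theory Submission
  imports Defs "HOL-Complex_Analysis.Complex_Analysis" "HOL-Real_Asymp.Real_Asymp"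
begin

definition hc :: "real \<Rightarrow> real \<Rightarrow> real \<Rightarrow> nat \<Rightarrow> real" where
  "hc a b c n = pochhammer a n * pochhammer b n / (pochhammer c n * fact n)"

lemma hc_0 [simp]: "hc a b c 0 = 1" by (simp add: hc_def)

lemma hc_Suc:
  assumes "c > 0"
  shows "hc a b c (Suc n) = hc a b c n * ((a + n) * (b + n)) / ((c + n) * (n + 1))"
proof -
  have "pochhammer c n > 0" using assms by (simp add: pochhammer_pos)
  moreover have "c + n > 0" using assms by simp
  ultimately show ?thesis
    by (simp add: hc_def pochhammer_Suc field_simps)
qed

lemma hc_pos: assumes "a > 0" "b > 0" "c > 0" shows "hc a b c n > 0"
  using assms by (simp add: hc_def pochhammer_pos)

lemma hc_rec:
  assumes "c > 0"
  shows "(n + 1) * (c + n) * hc a b c (Suc n) = (a + n) * (b + n) * hc a b c n"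
proof -
  have "c + n > 0" using assms by simp
  then have "(c + n) * (n + 1) \<noteq> 0" by simp
  then show ?thesis using assms by (simp only: hc_Suc) (simp add: field_simps)
qed

lemma conv_radius_hc:
  assumes "a > 0" "b > 0" "c > 0"
  shows "conv_radius (\<lambda>n. complex_of_real (hc a b c n)) = 1"
proof (rule conv_radius_ratio_limit_nonzero[where c = 1])
  have "(\<lambda>n. (c + n) * (n + 1) / ((a + n) * (b + n))) \<longlonglongrightarrow> 1"
    by real_asymp
  moreover have "norm (complex_of_real (hc a b c n)) / norm (complex_of_real (hc a b c (Suc n)))
      = (c + n) * (real n + 1) / ((a + n) * (b + n))" for n
  proof -
    have h: "hc a b c n > 0" "hc a b c (Suc n) > 0" using hc_pos assms by blast+
    have "(a+n)*(b+n) > 0" "(c+n)*(n+1) > 0" using assms by simp_all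
    then show ?thesis using assms h
      by (simp only: norm_of_real abs_of_pos hc_Suc) (simp add: field_simps)
  qed
  ultimately show "(\<lambda>n. norm (complex_of_real (hc a b c n)) / norm (complex_of_real (hc a b c (Suc n)))) \<longlonglongrightarrow> 1"
    by presburger
qed simp_all

definition ps :: "(nat \<Rightarrow> complex) \<Rightarrow> complex \<Rightarrow> complex" where
  "ps c z = (\<Sum>n. c n * z ^ n)"

lemma ps_deriv:
  assumes "\<And>z. norm z < 1 \<Longrightarrow> summable (\<lambda>n. c n * z ^ n)" "norm z < 1"
  shows "(ps c has_field_derivative ps (diffs c) z) (at z)"
  unfolding ps_def by (rule termdiffs_strong'[OF assms])

lemma ps_diffs_summable:
  fixes c :: "nat \<Rightarrow> complex"
  assumes "\<And>z. norm z < 1 \<Longrightarrow> summable (\<lambda>n. c n * z ^ n)" "norm z < 1"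
  shows "summable (\<lambda>n. diffs c n * z ^ n)"
  using termdiff_converges[of z 1 c] assms by blast

lemma sums_shift_mult:
  fixes z :: complex
  assumes "(\<lambda>n. c n * z ^ n) sums S"
  shows "(\<lambda>n. (if n = 0 then 0 else c (n - 1)) * z ^ n) sums (z * S)"
proof -
  have "(\<lambda>n. z * (c n * z ^ n)) sums (z * S)" by (rule sums_mult[OF assms])
  then have "(\<lambda>n. (if Suc n = 0 then 0 else c (Suc n - 1)) * z ^ Suc n) sums (z * S)"
    by (simp add: mult_ac)
  then show ?thesis by (subst (asm) sums_Suc_iff) simp
qed

definition hcc :: "real \<Rightarrow> real \<Rightarrow> real \<Rightarrow> nat \<Rightarrow> complex" where
  "hcc a b c n = complex_of_real (hc a b c n)"

definition hg :: "real \<Rightarrow> real \<Rightarrow> real \<Rightarrow> complex \<Rightarrow> complex" where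
  "hg a b c = ps (hcc a b c)"

lemma hcc_summable:
  assumes "a > 0" "b > 0" "c > 0" "norm z < 1"
  shows "summable (\<lambda>n. hcc a b c n * z ^ n)"
  unfolding hcc_def by (rule summable_in_conv_radius) (use assms conv_radius_hc in auto)

lemma hcc_rec:
  assumes "c > 0"
  shows "(of_nat n + 1) * (of_real c + of_nat n) * hcc a b c (Suc n) =
         (of_real a + of_nat n) * (of_real b + of_nat n) * hcc a b c n"
proof -
  have "(of_nat n + 1) * (of_real c + of_nat n) * hcc a b c (Suc n) =
        complex_of_real ((real n + 1) * (c + n) * hc a b c (Suc n))"
    by (simp add: hcc_def)
  also have "\<dots> = complex_of_real ((a + n) * (b + n) * hc a b c n)"
    using hc_rec[OF assms] by simp
  also have "\<dots> = (of_real a + of_nat n) * (of_real b + of_nat n) * hcc a b c n"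
    by (simp add: hcc_def)
  finally show ?thesis .
qed

lemma ps_ode_sums:
  fixes a b c :: real and h :: "nat \<Rightarrow> complex"
  assumes sm: "\<And>z. norm z < 1 \<Longrightarrow> summable (\<lambda>n. h n * z ^ n)"
    and z: "norm z < 1"
  shows "(\<lambda>n. ((of_nat n + 1) * (of_real c + of_nat n) * h (Suc n)
          - (of_real a + of_nat n) * (of_real b + of_nat n) * h n) * z ^ n) sums
       (z * (1 - z) * ps (diffs (diffs h)) z + (of_real c - (of_real a + of_real b + 1) * z) * ps (diffs h) z
          - of_real a * of_real b * ps h z)"
proof -
  define F where "F = ps h z"
  define F1 where "F1 = ps (diffs h) z"
  define F2 where "F2 = ps (diffs (diffs h)) z"
  have smd: "\<And>z. norm z < 1 \<Longrightarrow> summable (\<lambda>n. diffs h n * z ^ n)"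
    using ps_diffs_summable[OF sm] by blast
  have smdd: "summable (\<lambda>n. diffs (diffs h) n * z ^ n)"
    using ps_diffs_summable[OF smd z] .
  have s0: "(\<lambda>n. h n * z ^ n) sums F" unfolding F_def ps_def using sm[OF z] by (simp add: summable_sums)
  have s1: "(\<lambda>n. diffs h n * z ^ n) sums F1" unfolding F1_def ps_def using smd[OF z] by (simp add: summable_sums)
  have s2: "(\<lambda>n. diffs (diffs h) n * z ^ n) sums F2" unfolding F2_def ps_def using smdd by (simp add: summable_sums)
  have s2z: "(\<lambda>n. (of_nat n * (of_nat n + 1) * h (Suc n)) * z ^ n) sums (z * F2)"
  proof -
    have "(\<lambda>n. (if n = 0 then 0 else diffs (diffs h) (n - 1)) * z ^ n) sums (z * F2)"
      by (rule sums_shift_mult[OF s2])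
    moreover have "(if n = 0 then 0 else diffs (diffs h) (n - 1)) = of_nat n * (of_nat n + 1) * h (Suc n)" for n
      by (cases n) (simp_all add: diffs_def algebra_simps)
    ultimately show ?thesis by simp
  qed
  have s2zz: "(\<lambda>n. (of_nat n * (of_nat n - 1) * h n) * z ^ n) sums (z * (z * F2))"
  proof -
    have "(\<lambda>n. (if n = 0 then 0 else of_nat (n - 1) * (of_nat (n - 1) + 1) * h (Suc (n - 1))) * z ^ n) sums (z * (z * F2))"
      by (rule sums_shift_mult[OF s2z])
    moreover have "(if n = 0 then 0 else of_nat (n - 1) * (of_nat (n - 1) + 1) * h (Suc (n - 1))) = (of_nat n * (of_nat n - 1) * h n :: complex)" for n
      by (cases n) (simp_all add: algebra_simps)
    ultimately show ?thesis by simp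
  qed
  have s1z: "(\<lambda>n. (of_nat n * h n) * z ^ n) sums (z * F1)"
  proof -
    have "(\<lambda>n. (if n = 0 then 0 else diffs h (n - 1)) * z ^ n) sums (z * F1)"
      by (rule sums_shift_mult[OF s1])
    moreover have "(if n = 0 then 0 else diffs h (n - 1)) = of_nat n * h n" for n
      by (cases n) (simp_all add: diffs_def algebra_simps)
    ultimately show ?thesis by simp
  qed
  have s1': "(\<lambda>n. ((of_nat n + 1) * h (Suc n)) * z ^ n) sums F1"
    using s1 by (simp add: diffs_def algebra_simps)
  have comb: "(\<lambda>n. ((of_nat n * (of_nat n + 1) * h (Suc n)) * z ^ n + of_real c * (((of_nat n + 1) * h (Suc n)) * z ^ n))
      - ((of_nat n * (of_nat n - 1) * h n) * z ^ n + (of_real a + of_real b + 1) * ((of_nat n * h n) * z ^ n)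
         + of_real a * of_real b * (h n * z ^ n)))
     sums ((z * F2 + of_real c * F1) - (z * (z * F2) + (of_real a + of_real b + 1) * (z * F1) + of_real a * of_real b * F))"
    by (intro sums_diff sums_add sums_mult s2z s1' s2zz s1z s0)
  have "(\<lambda>n. ((of_nat n * (of_nat n + 1) * h (Suc n)) * z ^ n + of_real c * (((of_nat n + 1) * h (Suc n)) * z ^ n))
      - ((of_nat n * (of_nat n - 1) * h n) * z ^ n + (of_real a + of_real b + 1) * ((of_nat n * h n) * z ^ n)
         + of_real a * of_real b * (h n * z ^ n))) = (\<lambda>n. ((of_nat n + 1) * (of_real c + of_nat n) * h (Suc n)
          - (of_real a + of_nat n) * (of_real b + of_nat n) * h n) * z ^ n)"
    by (rule ext) (simp add: algebra_simps)
  moreover have "(z * F2 + of_real c * F1) - (z * (z * F2) + (of_real a + of_real b + 1) * (z * F1) + of_real a * of_real b * F)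
     = z * (1 - z) * ps (diffs (diffs h)) z + (of_real c - (of_real a + of_real b + 1) * z) * ps (diffs h) z
          - of_real a * of_real b * ps h z"
    unfolding F_def F1_def F2_def by (simp add: algebra_simps)
  ultimately show ?thesis using comb by simp
qed

lemma ps_ode:
  fixes a b c :: real and h :: "nat \<Rightarrow> complex"
  assumes sm: "\<And>z. norm z < 1 \<Longrightarrow> summable (\<lambda>n. h n * z ^ n)"
    and rec: "\<And>n. (of_nat n + 1) * (of_real c + of_nat n) * h (Suc n) =
         (of_real a + of_nat n) * (of_real b + of_nat n) * h n"
    and z: "norm z < 1"
  shows "z * (1 - z) * ps (diffs (diffs h)) z + (of_real c - (of_real a + of_real b + 1) * z) * ps (diffs h) z
          - of_real a * of_real b * ps h z = 0"
proof -
  have "(\<lambda>n. 0) sums (z * (1 - z) * ps (diffs (diffs h)) z + (of_real c - (of_real a + of_real b + 1) * z) * ps (diffs h) z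
          - of_real a * of_real b * ps h z)"
    using ps_ode_sums[OF sm z, of c a b] rec by simp
  then show ?thesis using sums_unique2 sums_zero by blast
qed

lemma ps_zero [simp]: "ps c 0 = c 0"
  unfolding ps_def by (rule powser_zero)

lemma hg_zero [simp]: "hg a b c 0 = 1"
  by (simp add: hg_def hcc_def)

definition hge_sol :: "complex \<Rightarrow> complex \<Rightarrow> complex \<Rightarrow> (complex \<Rightarrow> complex) \<Rightarrow> (complex \<Rightarrow> complex)
   \<Rightarrow> (complex \<Rightarrow> complex) \<Rightarrow> complex set \<Rightarrow> bool" where
  "hge_sol a b c y y1 y2 S \<longleftrightarrow> (\<forall>z\<in>S. (y has_field_derivative y1 z) (at z) \<and>
      (y1 has_field_derivative y2 z) (at z) \<and>
      z * (1 - z) * y2 z + (c - (a + b + 1) * z) * y1 z - a * b * y z = 0)"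

lemma hg_sol:
  assumes "a > 0" "b > 0" "c > 0"
  shows "hge_sol (of_real a) (of_real b) (of_real c) (hg a b c) (ps (diffs (hcc a b c)))
           (ps (diffs (diffs (hcc a b c)))) (ball 0 1)"
  unfolding hge_sol_def
proof safe
  fix z :: complex assume z: "z \<in> ball 0 1"
  then have nz: "norm z < 1" by simp
  have sm: "\<And>z. norm z < 1 \<Longrightarrow> summable (\<lambda>n. hcc a b c n * z ^ n)"
    using hcc_summable assms by blast
  have smd: "\<And>z. norm z < 1 \<Longrightarrow> summable (\<lambda>n. diffs (hcc a b c) n * z ^ n)"
    using ps_diffs_summable[OF sm] by blast
  show "(hg a b c has_field_derivative ps (diffs (hcc a b c)) z) (at z)"
    unfolding hg_def by (rule ps_deriv[OF sm nz])
  show "(ps (diffs (hcc a b c)) has_field_derivative ps (diffs (diffs (hcc a b c))) z) (at z)"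
    by (rule ps_deriv[OF smd nz])
  show "z * (1 - z) * ps (diffs (diffs (hcc a b c))) z +
       (complex_of_real c - (complex_of_real a + complex_of_real b + 1) * z) * ps (diffs (hcc a b c)) z -
       complex_of_real a * complex_of_real b * hg a b c z = 0"
    unfolding hg_def by (rule ps_ode[OF sm hcc_rec[OF assms(3)] nz])
qed

lemma hge_reflect:
  assumes "hge_sol a b c y y1 y2 S" "\<And>z. z \<in> T \<Longrightarrow> 1 - z \<in> S"
  shows "hge_sol a b (a + b + 1 - c) (\<lambda>z. y (1 - z)) (\<lambda>z. - y1 (1 - z)) (\<lambda>z. y2 (1 - z)) T"
  unfolding hge_sol_def
proof safe
  fix z assume z: "z \<in> T"
  then have S: "1 - z \<in> S" using assms(2) by blast
  have d1: "(y has_field_derivative y1 (1 - z)) (at (1 - z))"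
   and d2: "(y1 has_field_derivative y2 (1 - z)) (at (1 - z))"
   and e: "(1 - z) * (1 - (1 - z)) * y2 (1 - z) + (c - (a + b + 1) * (1 - z)) * y1 (1 - z) - a * b * y (1 - z) = 0"
    using assms(1) S unfolding hge_sol_def by auto
  have dm: "((\<lambda>z. 1 - z) has_field_derivative -1) (at z)"
    by (auto intro!: derivative_eq_intros)
  show "((\<lambda>z. y (1 - z)) has_field_derivative - y1 (1 - z)) (at z)"
    using DERIV_chain2[OF d1 dm] by simp
  have "((\<lambda>z. - y1 (1 - z)) has_field_derivative - (y2 (1 - z) * -1)) (at z)"
    by (rule DERIV_minus, rule DERIV_chain2[OF d2 dm])
  then show "((\<lambda>z. - y1 (1 - z)) has_field_derivative y2 (1 - z)) (at z)" by simp
  show "z * (1 - z) * y2 (1 - z) + (a + b + 1 - c - (a + b + 1) * z) * - y1 (1 - z) - a * b * y (1 - z) = 0"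
    using e by (simp add: algebra_simps)
qed

lemma hge_gauge:
  assumes sol: "hge_sol (a - c + 1) (b - c + 1) (2 - c) F F1 F2 S"
    and S: "\<And>z. z \<in> S \<Longrightarrow> z \<notin> \<real>\<^sub>\<le>\<^sub>0"
  shows "hge_sol a b c (\<lambda>z. z powr (1 - c) * F z)
     (\<lambda>z. (1 - c) * z powr (- c) * F z + z powr (1 - c) * F1 z)
     (\<lambda>z. (1 - c) * (- c) * z powr (- c - 1) * F z + 2 * (1 - c) * z powr (- c) * F1 z + z powr (1 - c) * F2 z) S"
  unfolding hge_sol_def
proof safe
  fix z assume zS: "z \<in> S"
  have z: "z \<notin> \<real>\<^sub>\<le>\<^sub>0" using S zS by blast
  then have z0: "z \<noteq> 0" by auto
  have d1: "(F has_field_derivative F1 z) (at z)"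
   and d2: "(F1 has_field_derivative F2 z) (at z)"
   and e: "z * (1 - z) * F2 z + (2 - c - (a - c + 1 + (b - c + 1) + 1) * z) * F1 z - (a - c + 1) * (b - c + 1) * F z = 0"
    using sol zS unfolding hge_sol_def by auto
  have p1: "((\<lambda>z. z powr (1 - c)) has_field_derivative (1 - c) * z powr (- c)) (at z)"
    using has_field_derivative_powr[OF z, of "1 - c"] by simp
  have p2: "((\<lambda>z. z powr (- c)) has_field_derivative (- c) * z powr (- c - 1)) (at z)"
    using has_field_derivative_powr[OF z, of "- c"] by simp
  show "((\<lambda>z. z powr (1 - c) * F z) has_field_derivative (1 - c) * z powr (- c) * F z + z powr (1 - c) * F1 z) (at z)"
    by (rule DERIV_cong[OF DERIV_mult[OF p1 d1]]) (simp add: algebra_simps)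
  have "((\<lambda>z. (1 - c) * (z powr (- c) * F z) + z powr (1 - c) * F1 z) has_field_derivative
      (1 - c) * ((- c) * z powr (- c - 1) * F z + z powr (- c) * F1 z) + ((1 - c) * z powr (- c) * F1 z + z powr (1 - c) * F2 z)) (at z)"
    by (rule DERIV_cong[OF DERIV_add[OF DERIV_cmult[OF DERIV_mult[OF p2 d1]] DERIV_mult[OF p1 d2]]]) (simp add: algebra_simps)
  then show "((\<lambda>z. (1 - c) * z powr (- c) * F z + z powr (1 - c) * F1 z) has_field_derivative
      (1 - c) * (- c) * z powr (- c - 1) * F z + 2 * (1 - c) * z powr (- c) * F1 z + z powr (1 - c) * F2 z) (at z)"
    by (simp add: algebra_simps)
  define P where "P = z powr (- c)"
  have q1: "z powr (1 - c) = z * P"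
    unfolding P_def using powr_add[of z 1 "- c"] by simp
  have q2: "z powr (- c - 1) = P / z"
    unfolding P_def using powr_diff[of z "- c" 1] by simp
  have "z * (1 - z) * ((1 - c) * (- c) * z powr (- c - 1) * F z + 2 * (1 - c) * z powr (- c) * F1 z + z powr (1 - c) * F2 z) +
       (c - (a + b + 1) * z) * ((1 - c) * z powr (- c) * F z + z powr (1 - c) * F1 z) -
       a * b * (z powr (1 - c) * F z)
     = z * P * (z * (1 - z) * F2 z + (2 - c - (a - c + 1 + (b - c + 1) + 1) * z) * F1 z - (a - c + 1) * (b - c + 1) * F z)"
    unfolding q1 q2 P_def[symmetric] using z0 by (simp add: field_simps)
  also have "\<dots> = 0" using e by simp
  finally show "z * (1 - z) * ((1 - c) * (- c) * z powr (- c - 1) * F z + 2 * (1 - c) * z powr (- c) * F1 z + z powr (1 - c) * F2 z) +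
       (c - (a + b + 1) * z) * ((1 - c) * z powr (- c) * F z + z powr (1 - c) * F1 z) -
       a * b * (z powr (1 - c) * F z) = 0" .
qed

lemma wronski_const:
  assumes S: "convex S"
    and sy: "hge_sol a b c y y1 y2 S" and sf: "hge_sol a b c f f1 f2 S"
    and A: "\<And>z. z \<in> S \<Longrightarrow> z * (1 - z) \<noteq> 0"
    and mu: "\<And>z. z \<in> S \<Longrightarrow> (\<mu> has_field_derivative \<mu> z * (c - (a + b + 1) * z) / (z * (1 - z))) (at z)"
  shows "\<exists>k. \<forall>z\<in>S. (y z * f1 z - y1 z * f z) * \<mu> z = k"
proof -
  have "\<exists>k. \<forall>z\<in>S. (\<lambda>z. (y z * f1 z - y1 z * f z) * \<mu> z) z = k"
  proof (rule has_field_derivative_zero_constant[OF S])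
    fix z assume z: "z \<in> S"
    have dy: "(y has_field_derivative y1 z) (at z)" and dy1: "(y1 has_field_derivative y2 z) (at z)"
     and ey: "z * (1 - z) * y2 z + (c - (a + b + 1) * z) * y1 z - a * b * y z = 0"
      using sy z unfolding hge_sol_def by auto
    have df: "(f has_field_derivative f1 z) (at z)" and df1: "(f1 has_field_derivative f2 z) (at z)"
     and ef: "z * (1 - z) * f2 z + (c - (a + b + 1) * z) * f1 z - a * b * f z = 0"
      using sf z unfolding hge_sol_def by auto
    have A0: "z * (1 - z) \<noteq> 0" using A z by blast
    have d: "((\<lambda>z. (y z * f1 z - y1 z * f z) * \<mu> z) has_field_derivative
        ((y1 z * f1 z + y z * f2 z) - (y2 z * f z + y1 z * f1 z)) * \<mu> z +
        (y z * f1 z - y1 z * f z) * (\<mu> z * (c - (a + b + 1) * z) / (z * (1 - z)))) (at z)"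
      by (rule DERIV_cong[OF DERIV_mult[OF DERIV_diff[OF DERIV_mult[OF dy df1] DERIV_mult[OF dy1 df]] mu[OF z]]])
         (simp add: algebra_simps)
    define D where "D = z * (1 - z)"
    have D0: "D \<noteq> 0" using A0 D_def by simp
    have E1: "D * y2 z = a * b * y z - (c - (a + b + 1) * z) * y1 z"
      using ey unfolding D_def by (simp add: algebra_simps)
    have E2: "D * f2 z = a * b * f z - (c - (a + b + 1) * z) * f1 z"
      using ef unfolding D_def by (simp add: algebra_simps)
    have "D * (((y1 z * f1 z + y z * f2 z) - (y2 z * f z + y1 z * f1 z)) * \<mu> z +
        (y z * f1 z - y1 z * f z) * (\<mu> z * (c - (a + b + 1) * z) / D)) =
        \<mu> z * (y z * (D * f2 z) - (D * y2 z) * f z + (y z * f1 z - y1 z * f z) * (c - (a + b + 1) * z))"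
      using D0 by (simp add: field_simps)
    also have "\<dots> = 0" unfolding E1 E2 by (simp add: algebra_simps)
    finally have "((y1 z * f1 z + y z * f2 z) - (y2 z * f z + y1 z * f1 z)) * \<mu> z +
        (y z * f1 z - y1 z * f z) * (\<mu> z * (c - (a + b + 1) * z) / (z * (1 - z))) = 0"
      using D0 unfolding D_def by simp
    then show "((\<lambda>z. (y z * f1 z - y1 z * f z) * \<mu> z) has_field_derivative 0) (at z within S)"
      using d by (simp add: has_field_derivative_at_within)
  qed
  then show ?thesis by simp
qed

lemma mu_deriv:
  fixes z c e :: complex
  assumes "z \<notin> \<real>\<^sub>\<le>\<^sub>0" "1 - z \<notin> \<real>\<^sub>\<le>\<^sub>0"
  shows "((\<lambda>z. z powr c * (1 - z) powr e) has_field_derivative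
           (z powr c * (1 - z) powr e) * (c - (c + e) * z) / (z * (1 - z))) (at z)"
proof -
  have z0: "z \<noteq> 0" "1 - z \<noteq> 0" using assms by auto
  have d1: "((\<lambda>z. z powr c) has_field_derivative c * z powr (c - 1)) (at z)"
    by (rule has_field_derivative_powr[OF assms(1)])
  have d2: "((\<lambda>z. (1 - z) powr e) has_field_derivative e * (1 - z) powr (e - 1) * (- 1)) (at z)"
    by (rule DERIV_chain2[where f="\<lambda>w. w powr e" and g="\<lambda>z. 1 - z", OF has_field_derivative_powr[OF assms(2)]]) (auto intro!: derivative_eq_intros)
  have q1: "z powr (c - 1) = z powr c / z" using powr_diff[of z c 1] by simp
  have q2: "(1 - z) powr (e - 1) = (1 - z) powr e / (1 - z)" using powr_diff[of "1 - z" e 1] by simp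
  show ?thesis
  proof (rule DERIV_cong[OF DERIV_mult[OF d1 d2]])
    show "c * z powr (c - 1) * (1 - z) powr e + e * (1 - z) powr (e - 1) * - 1 * z powr c =
      z powr c * (1 - z) powr e * (c - (c + e) * z) / (z * (1 - z))"
      unfolding q1 q2 using z0 by (simp add: field_simps)
  qed
qed

definition eps :: "real \<Rightarrow> real \<Rightarrow> nat \<Rightarrow> real" where
  "eps a b n = (\<Sum>k<n. 1 / (real k + a) + 1 / (real k + b) - 2 / (real k + 1))"

definition hlc :: "real \<Rightarrow> real \<Rightarrow> nat \<Rightarrow> complex" where
  "hlc a b n = complex_of_real (hc a b 1 n * eps a b n)"

definition hl :: "real \<Rightarrow> real \<Rightarrow> complex \<Rightarrow> complex" where
  "hl a b = ps (hlc a b)"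

lemma eps_bound:
  assumes "a > 0" "b > 0"
  shows "\<bar>eps a b n\<bar> \<le> real n * (1 / a + 1 / b + 2)"
proof -
  have "\<bar>eps a b n\<bar> \<le> (\<Sum>k<n. \<bar>1 / (real k + a) + 1 / (real k + b) - 2 / (real k + 1)\<bar>)"
    unfolding eps_def by (rule sum_abs)
  also have "\<dots> \<le> (\<Sum>k<n. 1 / a + 1 / b + 2)"
  proof (rule sum_mono)
    fix k :: nat
    have "1 / (real k + a) \<le> 1 / a" "1 / (real k + b) \<le> 1 / b" "2 / (real k + 1) \<le> 2"
      using assms by (auto simp: field_simps)
    moreover have "1 / (real k + a) \<ge> 0" "1 / (real k + b) \<ge> 0" "2 / (real k + 1) \<ge> (0::real)"
      using assms by auto
    ultimately show "\<bar>1 / (real k + a) + 1 / (real k + b) - 2 / (real k + 1)\<bar> \<le> 1 / a + 1 / b + 2"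
      by linarith
  qed
  finally show ?thesis by simp
qed

lemma conv_radius_nhc:
  assumes "a > 0" "b > 0"
  shows "conv_radius (\<lambda>n. complex_of_real (real n * hc a b 1 n)) = 1"
proof (rule conv_radius_ratio_limit[where c = 1])
  show "eventually (\<lambda>n. complex_of_real (real n * hc a b 1 n) \<noteq> 0) sequentially"
  proof (rule eventually_sequentiallyI[of 1])
    fix n :: nat assume "1 \<le> n"
    moreover have "hc a b 1 n > 0" using hc_pos assms by simp
    ultimately show "complex_of_real (real n * hc a b 1 n) \<noteq> 0" by simp
  qed
  have "(\<lambda>n. real n * (real n + 1) / ((a + n) * (b + n))) \<longlonglongrightarrow> 1"
    by real_asymp
  moreover have "norm (complex_of_real (real n * hc a b 1 n)) / norm (complex_of_real (real (Suc n) * hc a b 1 (Suc n)))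
      = real n * (real n + 1) / ((a + n) * (b + n))" for n
  proof -
    define H where "H = hc a b 1 n"
    define A where "A = a + real n"
    define B where "B = b + real n"
    define Q where "Q = real n + 1"
    have h: "H > 0" "hc a b 1 (Suc n) > 0" using hc_pos assms unfolding H_def by auto
    have p: "A > 0" "B > 0" "Q > 0" using assms unfolding A_def B_def Q_def by auto
    have r: "Q * (Q * hc a b 1 (Suc n)) = A * B * H"
      using hc_rec[of 1 n a b] unfolding A_def B_def Q_def H_def by (simp add: mult_ac add_ac)
    have e1: "Q * hc a b 1 (Suc n) = A * B * H / Q"
    proof -
      have "Q * hc a b 1 (Suc n) = (Q * (Q * hc a b 1 (Suc n))) / Q" using p by simp
      then show ?thesis unfolding r .
    qed
    have "norm (complex_of_real (real n * hc a b 1 n)) / norm (complex_of_real (real (Suc n) * hc a b 1 (Suc n)))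
       = (real n * H) / (Q * hc a b 1 (Suc n))"
      using h unfolding H_def Q_def by (simp only: norm_of_real) (simp add: abs_mult)
    also have "\<dots> = real n * Q / (A * B)"
      unfolding e1 using h p by (simp add: field_simps)
    also have "\<dots> = real n * (real n + 1) / ((a + n) * (b + n))" unfolding A_def B_def Q_def by simp
    finally show ?thesis .
  qed
  ultimately show "(\<lambda>n. norm (complex_of_real (real n * hc a b 1 n)) / norm (complex_of_real (real (Suc n) * hc a b 1 (Suc n)))) \<longlonglongrightarrow> 1"
    by presburger
qed simp

lemma hlc_summable:
  assumes "a > 0" "b > 0" "norm z < 1"
  shows "summable (\<lambda>n. hlc a b n * z ^ n)"
proof -
  define M where "M = 1 / a + 1 / b + 2"
  have "summable (\<lambda>n. norm (complex_of_real (real n * hc a b 1 n) * z ^ n))"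
    by (rule abs_summable_in_conv_radius) (use assms conv_radius_nhc in auto)
  then have "summable (\<lambda>n. M * norm (complex_of_real (real n * hc a b 1 n) * z ^ n))"
    by (rule summable_mult)
  moreover have "norm (hlc a b n * z ^ n) \<le> M * norm (complex_of_real (real n * hc a b 1 n) * z ^ n)" for n
  proof -
    have h: "hc a b 1 n > 0" using hc_pos assms by auto
    have "norm (hlc a b n * z ^ n) = hc a b 1 n * \<bar>eps a b n\<bar> * norm z ^ n"
      using h by (simp add: hlc_def norm_mult norm_power abs_mult)
    also have "\<dots> \<le> hc a b 1 n * (real n * M) * norm z ^ n"
      using eps_bound[OF assms(1,2), of n] h unfolding M_def
      by (intro mult_right_mono mult_left_mono) auto
    also have "\<dots> = M * norm (complex_of_real (real n * hc a b 1 n) * z ^ n)"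
      using h by (simp add: norm_mult norm_power abs_mult)
    finally show ?thesis .
  qed
  ultimately show ?thesis
    by (rule summable_comparison_test'[where N = 0])
qed

lemma eps_Suc: "eps a b (Suc n) = eps a b n + (1 / (real n + a) + 1 / (real n + b) - 2 / (real n + 1))"
  by (simp add: eps_def add_ac)

lemma hlc_rec:
  assumes "a > 0" "b > 0"
  shows "(of_nat n + 1) * (of_real 1 + of_nat n) * hlc a b (Suc n) - (of_real a + of_nat n) * (of_real b + of_nat n) * hlc a b n
       = - 2 * ((of_nat n + 1) * hcc a b 1 (Suc n)) + 2 * (of_nat n * hcc a b 1 n) + (of_real a + of_real b) * hcc a b 1 n"
proof -
  define H where "H = hc a b 1 n"
  define A where "A = a + real n"
  define B where "B = b + real n"
  define Q where "Q = real n + 1"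
  have p: "A \<noteq> 0" "B \<noteq> 0" "Q \<noteq> 0" using assms unfolding A_def B_def Q_def by auto
  have r: "Q * Q * hc a b 1 (Suc n) = A * B * H"
    using hc_rec[of 1 n a b] unfolding A_def B_def Q_def H_def by (simp add: mult_ac add_ac)
  have es: "eps a b (Suc n) = eps a b n + (1 / A + 1 / B - 2 / Q)"
    unfolding eps_Suc A_def B_def Q_def by (simp add: add_ac)
  have "(real n + 1) * (1 + n) * (hc a b 1 (Suc n) * eps a b (Suc n)) - (a + n) * (b + n) * (hc a b 1 n * eps a b n)
       = (Q * Q * hc a b 1 (Suc n)) * eps a b (Suc n) - A * B * (H * eps a b n)"
    unfolding A_def B_def Q_def H_def by (simp add: mult_ac add_ac)
  also have "\<dots> = A * B * H * (1 / A + 1 / B - 2 / Q)"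
    unfolding r es by (simp add: algebra_simps)
  also have "\<dots> = (A + B) * H - 2 * (A * B * H / Q)"
    using p by (simp add: field_simps)
  also have "A * B * H / Q = Q * hc a b 1 (Suc n)"
    using r p by (simp add: field_simps)
  finally have "(real n + 1) * (1 + n) * (hc a b 1 (Suc n) * eps a b (Suc n)) - (a + n) * (b + n) * (hc a b 1 n * eps a b n)
       = - 2 * ((n + 1) * hc a b 1 (Suc n)) + 2 * (n * hc a b 1 n) + (a + b) * hc a b 1 n"
    unfolding A_def B_def Q_def H_def by (simp add: algebra_simps)
  then have "complex_of_real ((real n + 1) * (1 + n) * (hc a b 1 (Suc n) * eps a b (Suc n)) - (a + n) * (b + n) * (hc a b 1 n * eps a b n))
       = complex_of_real (- 2 * ((n + 1) * hc a b 1 (Suc n)) + 2 * (n * hc a b 1 n) + (a + b) * hc a b 1 n)"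
    by simp
  then show ?thesis by (simp add: hlc_def hcc_def)
qed

lemma ps_basic_sums:
  fixes h :: "nat \<Rightarrow> complex"
  assumes sm: "\<And>z. norm z < 1 \<Longrightarrow> summable (\<lambda>n. h n * z ^ n)" and z: "norm z < 1"
  shows "(\<lambda>n. h n * z ^ n) sums ps h z"
    and "(\<lambda>n. ((of_nat n + 1) * h (Suc n)) * z ^ n) sums ps (diffs h) z"
    and "(\<lambda>n. (of_nat n * h n) * z ^ n) sums (z * ps (diffs h) z)"
proof -
  show "(\<lambda>n. h n * z ^ n) sums ps h z" unfolding ps_def using sm[OF z] by (simp add: summable_sums)
  have smd: "summable (\<lambda>n. diffs h n * z ^ n)" using ps_diffs_summable[OF sm z] .
  have s1: "(\<lambda>n. diffs h n * z ^ n) sums ps (diffs h) z" unfolding ps_def using smd by (simp add: summable_sums)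
  then show "(\<lambda>n. ((of_nat n + 1) * h (Suc n)) * z ^ n) sums ps (diffs h) z"
    by (simp add: diffs_def algebra_simps)
  have "(\<lambda>n. (if n = 0 then 0 else diffs h (n - 1)) * z ^ n) sums (z * ps (diffs h) z)"
    by (rule sums_shift_mult[OF s1])
  moreover have "(if n = 0 then 0 else diffs h (n - 1)) = of_nat n * h n" for n
    by (cases n) (simp_all add: diffs_def algebra_simps)
  ultimately show "(\<lambda>n. (of_nat n * h n) * z ^ n) sums (z * ps (diffs h) z)" by simp
qed

lemma hl_ode:
  assumes ab: "a > 0" "b > 0" and z: "norm z < 1"
  shows "z * (1 - z) * ps (diffs (diffs (hlc a b))) z + (of_real 1 - (of_real a + of_real b + 1) * z) * ps (diffs (hlc a b)) z
          - of_real a * of_real b * ps (hlc a b) z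
       = - 2 * ps (diffs (hcc a b 1)) z + 2 * (z * ps (diffs (hcc a b 1)) z) + (of_real a + of_real b) * ps (hcc a b 1) z"
proof -
  have sm: "\<And>z. norm z < 1 \<Longrightarrow> summable (\<lambda>n. hlc a b n * z ^ n)" using hlc_summable ab by blast
  have smh: "\<And>z. norm z < 1 \<Longrightarrow> summable (\<lambda>n. hcc a b 1 n * z ^ n)" using hcc_summable ab by simp
  have L: "(\<lambda>n. ((of_nat n + 1) * (of_real 1 + of_nat n) * hlc a b (Suc n)
          - (of_real a + of_nat n) * (of_real b + of_nat n) * hlc a b n) * z ^ n) sums
       (z * (1 - z) * ps (diffs (diffs (hlc a b))) z + (of_real 1 - (of_real a + of_real b + 1) * z) * ps (diffs (hlc a b)) z
          - of_real a * of_real b * ps (hlc a b) z)"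
    by (rule ps_ode_sums[OF sm z])
  have R: "(\<lambda>n. (- 2) * (((of_nat n + 1) * hcc a b 1 (Suc n)) * z ^ n) + 2 * ((of_nat n * hcc a b 1 n) * z ^ n)
       + (of_real a + of_real b) * (hcc a b 1 n * z ^ n)) sums
       (- 2 * ps (diffs (hcc a b 1)) z + 2 * (z * ps (diffs (hcc a b 1)) z) + (of_real a + of_real b) * ps (hcc a b 1) z)"
    by (intro sums_add sums_mult ps_basic_sums[OF smh z])
  have Req: "(\<lambda>n. ((of_nat n + 1) * (of_real 1 + of_nat n) * hlc a b (Suc n)
          - (of_real a + of_nat n) * (of_real b + of_nat n) * hlc a b n) * z ^ n) =
        (\<lambda>n. (- 2) * (((of_nat n + 1) * hcc a b 1 (Suc n)) * z ^ n) + 2 * ((of_nat n * hcc a b 1 n) * z ^ n)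
       + (of_real a + of_real b) * (hcc a b 1 n * z ^ n))"
  proof (rule ext)
    fix n
    have E: "(of_nat n + 1) * (of_real 1 + of_nat n) * hlc a b (Suc n)
          - (of_real a + of_nat n) * (of_real b + of_nat n) * hlc a b n =
         - 2 * ((of_nat n + 1) * hcc a b 1 (Suc n)) + 2 * (of_nat n * hcc a b 1 n) + (of_real a + of_real b) * hcc a b 1 n"
      by (rule hlc_rec[OF ab])
    show "((of_nat n + 1) * (of_real 1 + of_nat n) * hlc a b (Suc n)
          - (of_real a + of_nat n) * (of_real b + of_nat n) * hlc a b n) * z ^ n =
        (- 2) * (((of_nat n + 1) * hcc a b 1 (Suc n)) * z ^ n) + 2 * ((of_nat n * hcc a b 1 n) * z ^ n)
       + (of_real a + of_real b) * (hcc a b 1 n * z ^ n)"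
      unfolding E by (simp add: algebra_simps)
  qed
  show ?thesis using sums_unique2[OF L[unfolded Req] R] .
qed

lemma log_identity:
  fixes z L Y1 Y2 y1 H1 H2 a b H0 iz :: complex
  assumes zi: "z * iz = 1"
  shows "z * (1 - z) * (Y2 * L + 2 * (Y1 * iz) - y1 * (iz * iz) + H2) +
       (1 - (a + b + 1) * z) * (Y1 * L + y1 * iz + H1) - a * b * (y1 * L + H0) =
       L * (z * (1 - z) * Y2 + (1 - (a + b + 1) * z) * Y1 - a * b * y1)
       + (z * (1 - z) * H2 + (1 - (a + b + 1) * z) * H1 - a * b * H0)
       + (2 * (1 - z) * Y1 - (a + b) * y1)"
  using zi by algebra

lemma hge_log:
  assumes ab: "a > 0" "b > 0" and S: "\<And>z. z \<in> S \<Longrightarrow> norm z < 1 \<and> z \<notin> \<real>\<^sub>\<le>\<^sub>0"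
  shows "hge_sol (of_real a) (of_real b) 1 (\<lambda>z. hg a b 1 z * Ln z + hl a b z)
     (\<lambda>z. ps (diffs (hcc a b 1)) z * Ln z + hg a b 1 z * inverse z + ps (diffs (hlc a b)) z)
     (\<lambda>z. ps (diffs (diffs (hcc a b 1))) z * Ln z + 2 * (ps (diffs (hcc a b 1)) z * inverse z)
          - hg a b 1 z * (inverse z * inverse z) + ps (diffs (diffs (hlc a b))) z) S"
  unfolding hge_sol_def
proof safe
  fix z assume zS: "z \<in> S"
  have z1: "norm z < 1" and zr: "z \<notin> \<real>\<^sub>\<le>\<^sub>0" using S zS by auto
  then have z0: "z \<noteq> 0" by auto
  have hs: "hge_sol (of_real a) (of_real b) (of_real 1) (hg a b 1) (ps (diffs (hcc a b 1)))
           (ps (diffs (diffs (hcc a b 1)))) (ball 0 1)" using hg_sol[of a b 1] ab by simp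
  have d1: "(hg a b 1 has_field_derivative ps (diffs (hcc a b 1)) z) (at z)"
   and d2: "(ps (diffs (hcc a b 1)) has_field_derivative ps (diffs (diffs (hcc a b 1))) z) (at z)"
   and e: "z * (1 - z) * ps (diffs (diffs (hcc a b 1))) z + (of_real 1 - (of_real a + of_real b + 1) * z) * ps (diffs (hcc a b 1)) z
           - of_real a * of_real b * hg a b 1 z = 0"
    using hs z1 unfolding hge_sol_def by auto
  have sm: "\<And>z. norm z < 1 \<Longrightarrow> summable (\<lambda>n. hlc a b n * z ^ n)" using hlc_summable ab by blast
  have smd: "\<And>z. norm z < 1 \<Longrightarrow> summable (\<lambda>n. diffs (hlc a b) n * z ^ n)"
    using ps_diffs_summable[OF sm] by blast
  have l1: "(hl a b has_field_derivative ps (diffs (hlc a b)) z) (at z)"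
    unfolding hl_def by (rule ps_deriv[OF sm z1])
  have l2: "(ps (diffs (hlc a b)) has_field_derivative ps (diffs (diffs (hlc a b))) z) (at z)"
    by (rule ps_deriv[OF smd z1])
  have dL: "(Ln has_field_derivative inverse z) (at z)" by (rule has_field_derivative_Ln[OF zr])
  have dI: "((\<lambda>z. inverse z) has_field_derivative - (inverse z * 1 * inverse z)) (at z)"
    by (rule DERIV_inverse'[OF DERIV_ident z0])
  show "((\<lambda>z. hg a b 1 z * Ln z + hl a b z) has_field_derivative
          ps (diffs (hcc a b 1)) z * Ln z + hg a b 1 z * inverse z + ps (diffs (hlc a b)) z) (at z)"
    by (rule DERIV_cong[OF DERIV_add[OF DERIV_mult[OF d1 dL] l1]]) simp
  show "((\<lambda>z. ps (diffs (hcc a b 1)) z * Ln z + hg a b 1 z * inverse z + ps (diffs (hlc a b)) z) has_field_derivative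
          ps (diffs (diffs (hcc a b 1))) z * Ln z + 2 * (ps (diffs (hcc a b 1)) z * inverse z)
          - hg a b 1 z * (inverse z * inverse z) + ps (diffs (diffs (hlc a b))) z) (at z)"
    by (rule DERIV_cong[OF DERIV_add[OF DERIV_add[OF DERIV_mult[OF d2 dL] DERIV_mult[OF d1 dI]] l2]]) (simp add: algebra_simps)
  have H: "z * (1 - z) * ps (diffs (diffs (hlc a b))) z + (of_real 1 - (of_real a + of_real b + 1) * z) * ps (diffs (hlc a b)) z
          - of_real a * of_real b * ps (hlc a b) z
       = - 2 * ps (diffs (hcc a b 1)) z + 2 * (z * ps (diffs (hcc a b 1)) z) + (of_real a + of_real b) * ps (hcc a b 1) z"
    by (rule hl_ode[OF ab z1])
  have hgd: "hg a b 1 z = ps (hcc a b 1) z" by (simp add: hg_def)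
  show "z * (1 - z) * (ps (diffs (diffs (hcc a b 1))) z * Ln z + 2 * (ps (diffs (hcc a b 1)) z * inverse z) -
        hg a b 1 z * (inverse z * inverse z) + ps (diffs (diffs (hlc a b))) z) +
       (1 - (complex_of_real a + complex_of_real b + 1) * z) *
       (ps (diffs (hcc a b 1)) z * Ln z + hg a b 1 z * inverse z + ps (diffs (hlc a b)) z) -
       complex_of_real a * complex_of_real b * (hg a b 1 z * Ln z + hl a b z) = 0"
  proof -
    have "z * (1 - z) * (ps (diffs (diffs (hcc a b 1))) z * Ln z + 2 * (ps (diffs (hcc a b 1)) z * inverse z) -
        hg a b 1 z * (inverse z * inverse z) + ps (diffs (diffs (hlc a b))) z) +
       (1 - (complex_of_real a + complex_of_real b + 1) * z) *
       (ps (diffs (hcc a b 1)) z * Ln z + hg a b 1 z * inverse z + ps (diffs (hlc a b)) z) -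
       complex_of_real a * complex_of_real b * (hg a b 1 z * Ln z + hl a b z) =
       Ln z * (z * (1 - z) * ps (diffs (diffs (hcc a b 1))) z + (of_real 1 - (of_real a + of_real b + 1) * z) * ps (diffs (hcc a b 1)) z
           - of_real a * of_real b * hg a b 1 z)
       + (z * (1 - z) * ps (diffs (diffs (hlc a b))) z + (of_real 1 - (of_real a + of_real b + 1) * z) * ps (diffs (hlc a b)) z
          - of_real a * of_real b * ps (hlc a b) z)
       + (2 * (1 - z) * ps (diffs (hcc a b 1)) z - (of_real a + of_real b) * hg a b 1 z)"
      using log_identity[where z=z and iz="inverse z", OF right_inverse[OF z0]] by (simp add: hl_def)
    also have "\<dots> = 0" unfolding e H by (simp add: hgd algebra_simps)
    finally show ?thesis .
  qed
qed

lemma hge_sol_mono: "hge_sol a b c y y1 y2 S \<Longrightarrow> T \<subseteq> S \<Longrightarrow> hge_sol a b c y y1 y2 T"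
  unfolding hge_sol_def by blast

lemma decomp_general:
  assumes D: "convex D"
    and sg: "hge_sol a b c g g1 g2 D" and s1: "hge_sol a b c f1 f11 f12 D" and s2: "hge_sol a b c f2 f21 f22 D"
    and A: "\<And>z. z \<in> D \<Longrightarrow> z * (1 - z) \<noteq> 0"
    and mu: "\<And>z. z \<in> D \<Longrightarrow> (\<mu> has_field_derivative \<mu> z * (c - (a + b + 1) * z) / (z * (1 - z))) (at z)"
    and k12: "\<And>z. z \<in> D \<Longrightarrow> (f1 z * f21 z - f11 z * f2 z) * \<mu> z = k" and k0: "k \<noteq> 0"
  shows "\<exists>k1 k2. \<forall>z\<in>D. g z = k1 * f1 z + k2 * f2 z"
proof -
  obtain kA where kA: "\<And>z. z \<in> D \<Longrightarrow> (f1 z * g1 z - f11 z * g z) * \<mu> z = kA"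
    using wronski_const[OF D s1 sg A mu] by blast
  obtain kB where kB: "\<And>z. z \<in> D \<Longrightarrow> (f2 z * g1 z - f21 z * g z) * \<mu> z = kB"
    using wronski_const[OF D s2 sg A mu] by blast
  have "g z = (- kB / k) * f1 z + (kA / k) * f2 z" if z: "z \<in> D" for z
  proof -
    have "g z * ((f1 z * f21 z - f11 z * f2 z) * \<mu> z) =
          f2 z * ((f1 z * g1 z - f11 z * g z) * \<mu> z) - f1 z * ((f2 z * g1 z - f21 z * g z) * \<mu> z)"
      by (simp add: algebra_simps)
    then have "g z * k = f2 z * kA - f1 z * kB" using kA[OF z] kB[OF z] k12[OF z] by simp
    then show ?thesis using k0 by (simp add: field_simps)
  qed
  then show ?thesis by blast
qed

lemma D_facts:
  fixes r :: complex
  assumes "r \<in> ball (1/2) (1/2)"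
  shows "norm r < 1" "norm (1 - r) < 1" "r \<notin> \<real>\<^sub>\<le>\<^sub>0" "1 - r \<notin> \<real>\<^sub>\<le>\<^sub>0" "r * (1 - r) \<noteq> 0"
    "r \<noteq> 0" "Re r > 0" "Re (1 - r) > 0"
proof -
  have d: "norm (r - 1/2) < 1/2" using assms by (simp add: dist_norm norm_minus_commute)
  have "\<bar>Re (r - 1/2)\<bar> \<le> norm (r - 1/2)" by (rule abs_Re_le_cmod)
  then have re: "\<bar>Re r - 1/2\<bar> < 1/2" using d by simp
  show "Re r > 0" "Re (1 - r) > 0" using re abs_less_iff[of "Re r - 1/2" "1/2"] by auto
  have "norm r \<le> norm (r - 1/2) + norm (1/2 :: complex)" using norm_triangle_ineq[of "r - 1/2" "1/2"] by simp
  then show "norm r < 1" using d by simp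
  have "norm (1 - r) \<le> norm (1/2 - r) + norm (1/2 :: complex)" using norm_triangle_ineq[of "1/2 - r" "1/2"] by simp
  moreover have "norm (1/2 - r) = norm (r - 1/2)" by (rule norm_minus_commute)
  ultimately show "norm (1 - r) < 1" using d by simp
  show "r \<notin> \<real>\<^sub>\<le>\<^sub>0" "1 - r \<notin> \<real>\<^sub>\<le>\<^sub>0" using re by (auto simp: complex_nonpos_Reals_iff)
  show "r \<noteq> 0" using re by auto
  show "r * (1 - r) \<noteq> 0" using re by auto
qed

lemma hge_sol_cont:
  assumes "hge_sol a b c y y1 y2 S"
  shows "continuous_on S y" "continuous_on S y1"
  using assms unfolding hge_sol_def
  by (auto intro!: continuous_at_imp_continuous_on DERIV_isCont)

lemma cball_quarter:
  fixes r :: complex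
  assumes "r \<in> cball (1/4) (1/4)"
  shows "norm r < 1" "1 - r \<notin> \<real>\<^sub>\<le>\<^sub>0"
proof -
  have d: "norm (r - 1/4) \<le> 1/4" using assms by (simp add: dist_norm norm_minus_commute)
  have "norm r \<le> norm (r - 1/4) + norm (1/4 :: complex)" using norm_triangle_ineq[of "r - 1/4" "1/4"] by simp
  then show "norm r < 1" using d by simp
  have "\<bar>Re (r - 1/4)\<bar> \<le> norm (r - 1/4)" by (rule abs_Re_le_cmod)
  then have "Re r \<le> 1/2" using d by simp
  then show "1 - r \<notin> \<real>\<^sub>\<le>\<^sub>0" by (auto simp: complex_nonpos_Reals_iff)
qed

lemma quarter_sub: "ball (1/4 :: complex) (1/4) \<subseteq> ball (1/2) (1/2)"
proof
  fix r :: complex assume "r \<in> ball (1/4) (1/4)"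
  then have "norm (r - 1/4) < 1/4" by (simp add: dist_norm norm_minus_commute)
  moreover have "norm (r - 1/2) \<le> norm (r - 1/4) + norm (1/4 :: complex)"
    using norm_triangle_ineq[of "r - 1/4" "-1/4"] by simp
  ultimately show "r \<in> ball (1/2) (1/2)" by (simp add: dist_norm norm_minus_commute)
qed

lemma const_at_zero:
  fixes E :: "complex \<Rightarrow> complex"
  assumes E: "continuous_on (cball (1/4 :: complex) (1/4)) E"
    and k: "\<And>z. z \<in> ball (1/2) (1/2) \<Longrightarrow> E z = k"
  shows "E 0 = k"
proof -
  have "continuous_on (closure (ball (1/4 :: complex) (1/4))) E" using E by simp
  moreover have "\<And>x. x \<in> ball (1/4) (1/4) \<Longrightarrow> E x = k" using k quarter_sub by blast
  moreover have "(0::complex) \<in> closure (ball (1/4) (1/4))" by (simp add: dist_norm)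
  ultimately show ?thesis using continuous_constant_on_closure[of "ball (1/4) (1/4)" E k 0] by blast
qed

lemma cont_1m_powr:
  "continuous_on (cball (1/4 :: complex) (1/4)) (\<lambda>r. (1 - r) powr e)"
proof (intro continuous_at_imp_continuous_on ballI)
  fix r :: complex assume "r \<in> cball (1/4) (1/4)"
  then have "1 - r \<notin> \<real>\<^sub>\<le>\<^sub>0" by (rule cball_quarter)
  then have "((\<lambda>r. (1 - r) powr e) has_field_derivative e * (1 - r) powr (e - 1) * (- 1)) (at r)"
    by (rule DERIV_chain2[where f="\<lambda>w. w powr e" and g="\<lambda>z. 1 - z", OF has_field_derivative_powr])
       (auto intro!: derivative_eq_intros)
  then show "isCont (\<lambda>r. (1 - r) powr e) r" by (rule DERIV_isCont)
qed

lemma connection_nonlog: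
  fixes A B C c1 :: real
  assumes c1: "c1 = A + B + 1 - C"
    and pos: "A > 0" "B > 0" "C > 0" "c1 > 0" "c1 \<noteq> 1" "A - c1 + 1 > 0" "B - c1 + 1 > 0" "2 - c1 > 0"
  shows "\<exists>k1 k2. \<forall>r\<in>ball (1/2) (1/2). hg A B C (1 - r) =
     k1 * hg A B c1 r + k2 * (r powr (1 - of_real c1) * hg (A - c1 + 1) (B - c1 + 1) (2 - c1) r)"
proof -
  define D where "D = ball (1/2 :: complex) (1/2)"
  define c where "c = complex_of_real c1"
  define F where "F = hg (A - c1 + 1) (B - c1 + 1) (2 - c1)"
  define F1 where "F1 = ps (diffs (hcc (A - c1 + 1) (B - c1 + 1) (2 - c1)))"
  define F2 where "F2 = ps (diffs (diffs (hcc (A - c1 + 1) (B - c1 + 1) (2 - c1))))"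
  define f1 where "f1 = hg A B c1"
  define f11 where "f11 = ps (diffs (hcc A B c1))"
  define f12 where "f12 = ps (diffs (diffs (hcc A B c1)))"
  define e where "e = complex_of_real A + of_real B + 1 - c"
  define \<mu> where "\<mu> = (\<lambda>z::complex. z powr c * (1 - z) powr e)"
  have Dsub: "D \<subseteq> ball 0 1" using D_facts(1) unfolding D_def by auto
  have cvx: "convex D" unfolding D_def by simp
  have sg0: "hge_sol (of_real A) (of_real B) (of_real A + of_real B + 1 - of_real C) (\<lambda>z. hg A B C (1 - z))
     (\<lambda>z. - ps (diffs (hcc A B C)) (1 - z)) (\<lambda>z. ps (diffs (diffs (hcc A B C))) (1 - z)) D"
    by (rule hge_reflect[OF hg_sol[OF pos(1,2,3)]]) (use D_facts(2) in \<open>auto simp: D_def\<close>)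
  have sg: "hge_sol (of_real A) (of_real B) c (\<lambda>z. hg A B C (1 - z))
     (\<lambda>z. - ps (diffs (hcc A B C)) (1 - z)) (\<lambda>z. ps (diffs (diffs (hcc A B C))) (1 - z)) D"
    using sg0 unfolding c_def c1 by simp
  have s1: "hge_sol (of_real A) (of_real B) c f1 f11 f12 D"
    unfolding c_def f1_def f11_def f12_def by (rule hge_sol_mono[OF hg_sol[OF pos(1,2,4)] Dsub])
  have sF: "hge_sol (of_real A - c + 1) (of_real B - c + 1) (2 - c) F F1 F2 D"
    using hge_sol_mono[OF hg_sol[OF pos(6,7,8)] Dsub] unfolding c_def F_def F1_def F2_def by simp
  have s2: "hge_sol (of_real A) (of_real B) c (\<lambda>z. z powr (1 - c) * F z)
     (\<lambda>z. (1 - c) * z powr (- c) * F z + z powr (1 - c) * F1 z)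
     (\<lambda>z. (1 - c) * (- c) * z powr (- c - 1) * F z + 2 * (1 - c) * z powr (- c) * F1 z + z powr (1 - c) * F2 z) D"
    by (rule hge_gauge[OF sF]) (use D_facts(3) in \<open>auto simp: D_def\<close>)
  have Anz: "\<And>z. z \<in> D \<Longrightarrow> z * (1 - z) \<noteq> 0" using D_facts(5) unfolding D_def by blast
  have mu: "(\<mu> has_field_derivative \<mu> z * (c - (of_real A + of_real B + 1) * z) / (z * (1 - z))) (at z)"
    if z: "z \<in> D" for z
    unfolding \<mu>_def
    by (rule DERIV_cong[OF mu_deriv]) (use D_facts(3,4) z in \<open>auto simp: D_def e_def\<close>)
  define E where "E = (\<lambda>r. (1 - r) powr e * ((1 - c) * f1 r * F r + r * (f1 r * F1 r - f11 r * F r)))"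
  have WE: "(f1 r * ((1 - c) * r powr (- c) * F r + r powr (1 - c) * F1 r) - f11 r * (r powr (1 - c) * F r)) * \<mu> r = E r"
    if r: "r \<in> D" for r
  proof -
    have r0: "r \<noteq> 0" using D_facts(6) r unfolding D_def by blast
    have p1: "r powr (- c) * r powr c = 1" using r0 powr_add[of r "- c" c] by simp
    have p2: "r powr (1 - c) * r powr c = r" using r0 powr_add[of r "1 - c" c] by simp
    have "(f1 r * ((1 - c) * r powr (- c) * F r + r powr (1 - c) * F1 r) - f11 r * (r powr (1 - c) * F r)) * \<mu> r
       = (1 - r) powr e * ((1 - c) * f1 r * F r * (r powr (- c) * r powr c) + (f1 r * F1 r - f11 r * F r) * (r powr (1 - c) * r powr c))"
      unfolding \<mu>_def by (simp add: algebra_simps)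
    also have "\<dots> = E r" unfolding p1 p2 E_def by (simp add: algebra_simps)
    finally show ?thesis .
  qed
  obtain k where k: "\<And>z. z \<in> D \<Longrightarrow> (f1 z * ((1 - c) * z powr (- c) * F z + z powr (1 - c) * F1 z) - f11 z * (z powr (1 - c) * F z)) * \<mu> z = k"
    using wronski_const[OF cvx s1 s2 Anz mu] by blast
  have Ek: "\<And>z. z \<in> ball (1/2) (1/2) \<Longrightarrow> E z = k" using k WE unfolding D_def by metis
  have cb: "cball (1/4 :: complex) (1/4) \<subseteq> ball 0 1" using cball_quarter(1) by auto
  have cf1: "continuous_on (ball 0 1) f1" "continuous_on (ball 0 1) f11"
    using hge_sol_cont[OF hg_sol[OF pos(1,2,4)]] unfolding f1_def f11_def by auto
  have cF: "continuous_on (ball 0 1) F" "continuous_on (ball 0 1) F1"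
    using hge_sol_cont[OF hg_sol[OF pos(6,7,8)]] unfolding F_def F1_def by auto
  have "continuous_on (cball (1/4) (1/4)) E"
    unfolding E_def
    by (intro continuous_intros cont_1m_powr continuous_on_subset[OF cf1(1) cb] continuous_on_subset[OF cf1(2) cb]
          continuous_on_subset[OF cF(1) cb] continuous_on_subset[OF cF(2) cb])
  then have "E 0 = k" using const_at_zero Ek by blast
  moreover have "E 0 = 1 - c" unfolding E_def f1_def F_def by simp
  ultimately have kc: "k = 1 - c" by simp
  have k0: "k \<noteq> 0" using kc pos(5) unfolding c_def by simp
  obtain k1 k2 where kk: "\<forall>z\<in>D. hg A B C (1 - z) = k1 * f1 z + k2 * (z powr (1 - c) * F z)"
    using decomp_general[OF cvx sg s1 s2 Anz mu k k0] by blast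
  show ?thesis using kk unfolding D_def f1_def F_def c_def by blast
qed

lemma connection_log:
  fixes A B C :: real
  assumes c1: "A + B = C" and pos: "A > 0" "B > 0"
  shows "\<exists>k1 k2. \<forall>r\<in>ball (1/2) (1/2). hg A B C (1 - r) =
     k1 * hg A B 1 r + k2 * (hg A B 1 r * Ln r + hl A B r)"
proof -
  have Cp: "C > 0" using pos c1 by simp
  define D where "D = ball (1/2 :: complex) (1/2)"
  define f1 where "f1 = hg A B 1"
  define f11 where "f11 = ps (diffs (hcc A B 1))"
  define f12 where "f12 = ps (diffs (diffs (hcc A B 1)))"
  define H1 where "H1 = ps (diffs (hlc A B))"
  define e where "e = complex_of_real A + of_real B + 1 - 1"
  define \<mu> where "\<mu> = (\<lambda>z::complex. z powr 1 * (1 - z) powr e)"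
  have Dsub: "D \<subseteq> ball 0 1" using D_facts(1) unfolding D_def by auto
  have cvx: "convex D" unfolding D_def by simp
  have sg0: "hge_sol (of_real A) (of_real B) (of_real A + of_real B + 1 - of_real C) (\<lambda>z. hg A B C (1 - z))
     (\<lambda>z. - ps (diffs (hcc A B C)) (1 - z)) (\<lambda>z. ps (diffs (diffs (hcc A B C))) (1 - z)) D"
    by (rule hge_reflect[OF hg_sol[OF pos(1,2) Cp]]) (use D_facts(2) in \<open>auto simp: D_def\<close>)
  have sg: "hge_sol (of_real A) (of_real B) 1 (\<lambda>z. hg A B C (1 - z))
     (\<lambda>z. - ps (diffs (hcc A B C)) (1 - z)) (\<lambda>z. ps (diffs (diffs (hcc A B C))) (1 - z)) D"
    using sg0 unfolding c1[symmetric] by simp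
  have s1: "hge_sol (of_real A) (of_real B) 1 f1 f11 f12 D"
    using hge_sol_mono[OF hg_sol[of A B 1] Dsub] pos unfolding f1_def f11_def f12_def by simp
  have s2: "hge_sol (of_real A) (of_real B) 1 (\<lambda>z. hg A B 1 z * Ln z + hl A B z)
     (\<lambda>z. f11 z * Ln z + f1 z * inverse z + H1 z)
     (\<lambda>z. ps (diffs (diffs (hcc A B 1))) z * Ln z + 2 * (ps (diffs (hcc A B 1)) z * inverse z)
          - hg A B 1 z * (inverse z * inverse z) + ps (diffs (diffs (hlc A B))) z) D"
    unfolding f11_def f1_def H1_def
    by (rule hge_log[OF pos]) (use D_facts(1,3) in \<open>auto simp: D_def\<close>)
  have Anz: "\<And>z. z \<in> D \<Longrightarrow> z * (1 - z) \<noteq> 0" using D_facts(5) unfolding D_def by blast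
  have mu: "(\<mu> has_field_derivative \<mu> z * (1 - (of_real A + of_real B + 1) * z) / (z * (1 - z))) (at z)"
    if z: "z \<in> D" for z
    unfolding \<mu>_def
    by (rule DERIV_cong[OF mu_deriv]) (use D_facts(3,4) z in \<open>auto simp: D_def e_def\<close>)
  define E where "E = (\<lambda>r. (1 - r) powr e * (f1 r * f1 r + r * (f1 r * H1 r - f11 r * hl A B r)))"
  have WE: "(f1 r * (f11 r * Ln r + f1 r * inverse r + H1 r) - f11 r * (hg A B 1 r * Ln r + hl A B r)) * \<mu> r = E r"
    if r: "r \<in> D" for r
  proof -
    have r0: "r \<noteq> 0" using D_facts(6) r unfolding D_def by blast
    show ?thesis unfolding \<mu>_def E_def f1_def using r0 by (simp add: field_simps)
  qed
  obtain k where k: "\<And>z. z \<in> D \<Longrightarrow> (f1 z * (f11 z * Ln z + f1 z * inverse z + H1 z) - f11 z * (hg A B 1 z * Ln z + hl A B z)) * \<mu> z = k"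
    using wronski_const[OF cvx s1 s2 Anz mu] by blast
  have Ek: "\<And>z. z \<in> ball (1/2) (1/2) \<Longrightarrow> E z = k" using k WE unfolding D_def by metis
  have cb: "cball (1/4 :: complex) (1/4) \<subseteq> ball 0 1" using cball_quarter(1) by auto
  have cf1: "continuous_on (ball 0 1) f1" "continuous_on (ball 0 1) f11"
    using hge_sol_cont[OF hg_sol[of A B 1]] pos unfolding f1_def f11_def by auto
  have sm: "\<And>z. norm z < 1 \<Longrightarrow> summable (\<lambda>n. hlc A B n * z ^ n)" using hlc_summable pos by blast
  have smd: "\<And>z. norm z < 1 \<Longrightarrow> summable (\<lambda>n. diffs (hlc A B) n * z ^ n)"
    using ps_diffs_summable[OF sm] by blast
  have cH: "continuous_on (ball 0 1) (hl A B)" "continuous_on (ball 0 1) H1"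
    unfolding hl_def H1_def
    by (auto intro!: continuous_at_imp_continuous_on DERIV_isCont ps_deriv[OF sm] ps_deriv[OF smd])
  have "continuous_on (cball (1/4) (1/4)) E"
    unfolding E_def
    by (intro continuous_intros cont_1m_powr continuous_on_subset[OF cf1(1) cb] continuous_on_subset[OF cf1(2) cb]
          continuous_on_subset[OF cH(1) cb] continuous_on_subset[OF cH(2) cb])
  then have "E 0 = k" using const_at_zero Ek by blast
  moreover have "E 0 = 1" unfolding E_def f1_def by simp
  ultimately have kc: "k = 1" by simp
  have k0: "k \<noteq> 0" using kc by simp
  obtain k1 k2 where kk: "\<forall>z\<in>D. hg A B C (1 - z) = k1 * f1 z + k2 * (hg A B 1 z * Ln z + hl A B z)"
    using decomp_general[OF cvx sg s1 s2 Anz mu k k0] by blast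
  show ?thesis using kk unfolding D_def f1_def by blast
qed

section \<open>Real integrals\<close>

lemma sin_powr_identity:
  fixes x :: real and N :: nat
  assumes "x > 0" "N \<ge> 2"
  shows "x * (x\<^sup>2) powr ((real N - 3) / 2) = x ^ (N - 2)"
proof -
  have "(x\<^sup>2) powr ((real N - 3) / 2) = (x powr 2) powr ((real N - 3) / 2)"
    using assms by (simp add: powr_realpow)
  also have "\<dots> = x powr (2 * ((real N - 3) / 2))" by (simp add: powr_powr)
  also have "2 * ((real N - 3) / 2) = real N - 3" by simp
  finally have "x * (x\<^sup>2) powr ((real N - 3) / 2) = x * x powr (real N - 3)" by simp
  also have "\<dots> = x powr (1 + (real N - 3))" using assms by (simp add: powr_mult_base)
  also have "1 + (real N - 3) = real (N - 2)" using assms by (simp add: of_nat_diff)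
  also have "x powr real (N - 2) = x ^ (N - 2)" by (rule powr_realpow) (use assms in simp)
  finally show ?thesis .
qed

lemma cos_image_0_pi: "cos ` {0..pi} = {-1..1}"
proof safe
  fix x :: real
  assume "x \<in> {-1..1}"
  then show "x \<in> cos ` {0..pi}"
    using arccos_lbound arccos_ubound
    by (intro image_eqI[where x="arccos x"]) auto
qed simp_all

lemma change_to_theta:
  fixes N :: nat and a t :: real
  assumes N: "N \<ge> 2" and pos: "\<And>\<theta>. 1 + t\<^sup>2 - 2 * t * cos \<theta> > 0"
  shows "integral {-1..1} (\<lambda>u. (1 - u\<^sup>2) powr ((real N - 3) / 2) / (1 + t\<^sup>2 - 2 * t * u) powr a)
       = integral {0..pi} (\<lambda>\<theta>. sin \<theta> ^ (N - 2) / (1 + t\<^sup>2 - 2 * t * cos \<theta>) powr a)"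
proof -
  define f where "f = (\<lambda>u. (1 - u\<^sup>2) powr ((real N - 3) / 2) / (1 + t\<^sup>2 - 2 * t * u) powr a)"
  define h where "h = (\<lambda>\<theta>. sin \<theta> ^ (N - 2) / (1 + t\<^sup>2 - 2 * t * cos \<theta>) powr a)"
  define k where "k = (\<lambda>\<theta>. \<bar>- sin \<theta>\<bar> * f (cos \<theta>))"
  have ch: "continuous_on {0..pi} h"
  proof -
    have pz: "\<And>\<theta>. 1 + t\<^sup>2 \<noteq> 2 * t * cos \<theta>" using pos by (metis less_irrefl diff_self)
    show ?thesis unfolding h_def by (intro continuous_intros) (simp_all add: pz pos)
  qed
  then have hi: "h absolutely_integrable_on {0..pi}" by (rule absolutely_integrable_continuous_real)
  have kh: "k \<theta> = h \<theta>" if "\<theta> \<in> {0..pi} - {0, pi}" for \<theta>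
  proof -
    have th: "0 < \<theta>" "\<theta> < pi" using that by auto
    have sp: "sin \<theta> > 0" using sin_gt_zero[OF th] .
    have "1 - (cos \<theta>)\<^sup>2 = (sin \<theta>)\<^sup>2" by (simp add: sin_squared_eq)
    then have "k \<theta> = sin \<theta> * ((sin \<theta>)\<^sup>2) powr ((real N - 3) / 2) / (1 + t\<^sup>2 - 2 * t * cos \<theta>) powr a"
      unfolding k_def f_def using sp by simp
    also have "\<dots> = h \<theta>" unfolding h_def using sin_powr_identity[OF sp N] by simp
    finally show ?thesis .
  qed
  have ki: "k absolutely_integrable_on {0..pi}"
    by (rule absolutely_integrable_spike[OF hi, of "{0, pi}"]) (use kh in auto)
  have kint: "integral {0..pi} k = integral {0..pi} h"
    by (rule integral_spike[of "{0, pi}"]) (use kh in auto)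
  have der: "(cos has_field_derivative - sin x) (at x within {0..pi})" for x
    by (auto intro!: derivative_eq_intros)
  have inj: "inj_on cos {0..pi}" by (auto intro!: inj_onI cos_inj_pi)
  have "f absolutely_integrable_on (cos ` {0..pi}) \<and> integral (cos ` {0..pi}) f = integral {0..pi} k"
    using has_absolute_integral_change_of_variables_1'[of "{0..pi}" cos "\<lambda>x. - sin x" f "integral {0..pi} k", OF _ der inj]
      ki unfolding k_def by simp
  then show ?thesis using kint unfolding cos_image_0_pi f_def h_def by simp
qed

lemma deriv_sin_pow: "((\<lambda>x. sin x ^ Suc n) has_real_derivative (real (Suc n) * sin x ^ n * cos x)) (at x within S)"
  by (rule DERIV_cong[OF DERIV_power_Suc[OF has_field_derivative_at_within[OF DERIV_sin]]]) (simp add: algebra_simps)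

lemma deriv_cos_pow: "((\<lambda>x. cos x ^ Suc n) has_real_derivative (real (Suc n) * cos x ^ n * (- sin x))) (at x within S)"
  by (rule DERIV_cong[OF DERIV_power_Suc[OF has_field_derivative_at_within[OF DERIV_cos]]]) (simp add: algebra_simps)

definition mom :: "nat \<Rightarrow> nat \<Rightarrow> real" where
  "mom n k = integral {0..pi} (\<lambda>\<theta>. sin \<theta> ^ n * cos \<theta> ^ k)"

lemma mom_integrable: "(\<lambda>\<theta>. sin \<theta> ^ n * cos \<theta> ^ k) integrable_on {0..pi}"
  by (intro integrable_continuous_real continuous_intros)

lemma mom_rec: "(real n + 2 + real k) * mom n (k + 2) = (real k + 1) * mom n k"
proof -
  define F where "F = (\<lambda>\<theta>::real. sin \<theta> ^ Suc n * cos \<theta> ^ Suc k)"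
  define F' where "F' = (\<lambda>\<theta>::real. (real n + 2 + real k) * (sin \<theta> ^ n * cos \<theta> ^ (k + 2)) - (real k + 1) * (sin \<theta> ^ n * cos \<theta> ^ k))"
  have d: "(F has_vector_derivative F' x) (at x within {0..pi})" for x
  proof -
    have "(F has_real_derivative (real (Suc n) * sin x ^ n * cos x * cos x ^ Suc k + sin x ^ Suc n * (real (Suc k) * cos x ^ k * - sin x))) (at x within {0..pi})"
      unfolding F_def by (rule DERIV_cong[OF DERIV_mult[OF deriv_sin_pow deriv_cos_pow]]) simp
    moreover have "real (Suc n) * sin x ^ n * cos x * cos x ^ Suc k + sin x ^ Suc n * (real (Suc k) * cos x ^ k * - sin x) = F' x"
    proof -
      have "sin x ^ Suc n * (real (Suc k) * cos x ^ k * - sin x) = - (real k + 1) * sin x ^ n * cos x ^ k * (sin x)\<^sup>2"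
        by (simp add: power2_eq_square algebra_simps)
      also have "(sin x)\<^sup>2 = 1 - (cos x)\<^sup>2" by (rule sin_squared_eq)
      finally show ?thesis unfolding F'_def by (simp add: power2_eq_square algebra_simps)
    qed
    ultimately show ?thesis by (simp add: has_real_derivative_iff_has_vector_derivative)
  qed
  have "(F' has_integral F pi - F 0) {0..pi}"
    by (rule fundamental_theorem_of_calculus) (use d pi_ge_zero in auto)
  then have "integral {0..pi} F' = 0" unfolding F_def by (simp add: integral_unique)
  moreover have "integral {0..pi} F' = (real n + 2 + real k) * mom n (k + 2) - (real k + 1) * mom n k"
  proof -
    have i1: "(\<lambda>\<theta>. (real n + 2 + real k) * (sin \<theta> ^ n * cos \<theta> ^ (k + 2))) integrable_on {0..pi}"
      by (intro integrable_continuous_real continuous_intros)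
    have i2: "(\<lambda>\<theta>. (real k + 1) * (sin \<theta> ^ n * cos \<theta> ^ k)) integrable_on {0..pi}"
      by (intro integrable_continuous_real continuous_intros)
    show ?thesis unfolding F'_def mom_def integral_diff[OF i1 i2] integral_mult_right ..
  qed
  ultimately show ?thesis by simp
qed

lemma mom_1: "mom n 1 = 0"
proof -
  define F where "F = (\<lambda>\<theta>::real. sin \<theta> ^ Suc n / (real n + 1))"
  have d: "(F has_vector_derivative (sin x ^ n * cos x ^ 1)) (at x within {0..pi})" for x
  proof -
    have "(F has_real_derivative (real (Suc n) * sin x ^ n * cos x / (real n + 1))) (at x within {0..pi})"
      unfolding F_def by (rule DERIV_cdivide[OF deriv_sin_pow])
    moreover have "real (Suc n) * sin x ^ n * cos x / (real n + 1) = sin x ^ n * cos x ^ 1"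
      by (simp add: field_simps)
    ultimately show ?thesis by (simp add: has_real_derivative_iff_has_vector_derivative)
  qed
  have "((\<lambda>x. sin x ^ n * cos x ^ 1) has_integral F pi - F 0) {0..pi}"
    by (rule fundamental_theorem_of_calculus) (use d pi_ge_zero in auto)
  then show ?thesis unfolding mom_def F_def by (simp add: integral_unique)
qed

lemma mom_odd: "mom n (2 * j + 1) = 0"
proof (induction j)
  case 0 then show ?case using mom_1 by simp
next
  case (Suc j)
  have "(real n + 2 + real (2 * j + 1)) * mom n (2 * j + 1 + 2) = (real (2 * j + 1) + 1) * mom n (2 * j + 1)"
    by (rule mom_rec)
  then have "(real n + 2 + real (2 * j + 1)) * mom n (2 * Suc j + 1) = 0" using Suc by simp
  moreover have "real n + 2 + real (2 * j + 1) \<noteq> 0" by simp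
  ultimately show ?case by simp
qed

lemma mom_0_pos: "mom n 0 > 0"
proof -
  have i: "(\<lambda>\<theta>. sin \<theta> ^ n) integrable_on {0..pi}"
    using mom_integrable[of n 0] by simp
  have "integral {pi/6..5*pi/6} (\<lambda>\<theta>::real. (1/2::real) ^ n) \<le> integral {pi/6..5*pi/6} (\<lambda>\<theta>. sin \<theta> ^ n)"
  proof (rule integral_le)
    show "(\<lambda>\<theta>::real. (1/2::real) ^ n) integrable_on {pi/6..5*pi/6}" by (rule integrable_const_ivl)
    show "(\<lambda>\<theta>. sin \<theta> ^ n) integrable_on {pi/6..5*pi/6}"
      by (intro integrable_continuous_real continuous_intros)
    fix x assume x: "x \<in> {pi/6..5*pi/6}"
    have "sin x \<ge> 1/2"
    proof (cases "x \<le> pi/2")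
      case True
      have "sin (pi/6) \<le> sin x" using x True by (intro sin_monotone_2pi_le) auto
      then show ?thesis by (simp add: sin_30)
    next
      case False
      have "sin (pi - x) \<ge> sin (pi/6)" using x False by (intro sin_monotone_2pi_le) auto
      then show ?thesis by (simp add: sin_30)
    qed
    then show "(1/2) ^ n \<le> sin x ^ n" by (intro power_mono) auto
  qed
  moreover have "integral {pi/6..5*pi/6} (\<lambda>\<theta>::real. (1/2::real) ^ n) > 0"
  proof -
    have "integral {pi/6..5*pi/6} (\<lambda>\<theta>::real. (1/2::real) ^ n) = (2 * pi / 3) * (1/2) ^ n"
      by (simp add: real_scaleR_def)
    moreover have "(2 * pi / 3) * (1/2::real) ^ n > 0" using pi_gt_zero by (intro mult_pos_pos) auto
    ultimately show ?thesis by linarith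
  qed
  moreover have "integral {pi/6..5*pi/6} (\<lambda>\<theta>. sin \<theta> ^ n) \<le> integral {0..pi} (\<lambda>\<theta>. sin \<theta> ^ n)"
    by (rule integral_subset_le) (use i pi_gt_zero in \<open>auto intro!: integrable_on_subinterval[OF i] zero_le_power sin_ge_zero\<close>)
  ultimately have "integral {0..pi} (\<lambda>\<theta>. sin \<theta> ^ n) > 0" by (meson less_le_trans)
  then show ?thesis unfolding mom_def by simp
qed

lemma coef_even:
  fixes a :: real
  shows "pochhammer a (2 * j) / fact (2 * j) * mom n (2 * j) = mom n 0 * hc (a / 2) ((a + 1) / 2) ((real n + 2) / 2) j"
proof (induction j)
  case 0 then show ?case by simp
next
  case (Suc j)
  define P where "P = pochhammer a (2 * j)"
  define Fj where "Fj = (fact (2 * j) :: real)"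
  define M where "M = mom n (2 * j)"
  have Fj0: "Fj > 0" unfolding Fj_def by simp
  have p: "pochhammer a (2 * Suc j) = P * (a + 2 * j) * (a + 2 * j + 1)"
    unfolding P_def by (simp add: pochhammer_Suc algebra_simps)
  have f: "(fact (2 * Suc j) :: real) = Fj * (2 * j + 1) * (2 * j + 2)"
    unfolding Fj_def by (simp add: algebra_simps)
  have m: "mom n (2 * Suc j) = M * (2 * j + 1) / (real n + 2 + 2 * j)"
  proof -
    have "(real n + 2 + real (2 * j)) * mom n (2 * j + 2) = (real (2 * j) + 1) * mom n (2 * j)" by (rule mom_rec)
    moreover have "real n + 2 + real (2 * j) > 0" by simp
    ultimately show ?thesis unfolding M_def by (simp add: field_simps)
  qed
  have h: "hc (a / 2) ((a + 1) / 2) ((real n + 2) / 2) (Suc j) =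
      hc (a / 2) ((a + 1) / 2) ((real n + 2) / 2) j * ((a / 2 + j) * ((a + 1) / 2 + j)) / (((real n + 2) / 2 + j) * (j + 1))"
    by (rule hc_Suc) (simp add: add_pos_nonneg)
  have IH: "P / Fj * M = mom n 0 * hc (a / 2) ((a + 1) / 2) ((real n + 2) / 2) j"
    using Suc.IH unfolding P_def Fj_def M_def .
  define B1 where "B1 = a / 2 + real j"
  define B2 where "B2 = (a + 1) / 2 + real j"
  define B3 where "B3 = (real n + 2) / 2 + real j"
  define B4 where "B4 = real j + 1"
  define Q1 where "Q1 = 2 * real j + 1"
  have B3p: "B3 > 0" "B4 > 0" "Q1 > 0" unfolding B3_def B4_def Q1_def by (auto intro: add_pos_nonneg)
  have e1: "a + 2 * real j = 2 * B1" "a + 2 * real j + 1 = 2 * B2" "2 * real j + 2 = 2 * B4"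
     "real n + 2 + 2 * real j = 2 * B3" unfolding B1_def B2_def B3_def B4_def by (simp_all add: field_simps)
  have "pochhammer a (2 * Suc j) / fact (2 * Suc j) * mom n (2 * Suc j)
      = P * (2 * B1) * (2 * B2) / (Fj * Q1 * (2 * B4)) * (M * Q1 / (2 * B3))"
    unfolding p f m e1[symmetric] Q1_def by simp
  also have "\<dots> = (P / Fj * M) * (B1 * B2) / (B3 * B4)"
    using Fj0 B3p by (simp add: field_simps)
  also have "\<dots> = mom n 0 * hc (a / 2) ((a + 1) / 2) ((real n + 2) / 2) j * ((a / 2 + j) * ((a + 1) / 2 + j)) / (((real n + 2) / 2 + j) * (j + 1))"
    unfolding IH B1_def B2_def B3_def B4_def by (simp add: algebra_simps)
  also have "\<dots> = mom n 0 * hc (a / 2) ((a + 1) / 2) ((real n + 2) / 2) (Suc j)"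
    unfolding h by simp
  finally show ?case .
qed

lemma binom_series:
  fixes a x :: real
  assumes "a > 0" "\<bar>x\<bar> < 1"
  shows "(\<lambda>k. pochhammer a k / fact k * x ^ k) sums (1 - x) powr (- a)"
proof -
  have "(\<lambda>k. ((- a) gchoose k) * (- x) ^ k) sums (1 + - x) powr (- a)"
    by (rule gen_binomial_real) (use assms in simp)
  moreover have "((- a) gchoose k) * (- x) ^ k = pochhammer a k / fact k * x ^ k" for k
    by (simp add: gbinomial_pochhammer power_mult_distrib[symmetric])
  ultimately show ?thesis by simp
qed

lemma hc_a11: "hc a 1 1 k = pochhammer a k / fact k"
  by (simp add: hc_def pochhammer_fact[symmetric])

lemma binom_abs_summable:
  fixes a x :: real
  assumes "a > 0" "\<bar>x\<bar> < 1"
  shows "summable (\<lambda>k. pochhammer a k / fact k * \<bar>x\<bar> ^ k)"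
proof -
  have "summable (\<lambda>k. norm (complex_of_real (hc a 1 1 k) * complex_of_real \<bar>x\<bar> ^ k))"
    by (rule abs_summable_in_conv_radius) (use assms conv_radius_hc[of a 1 1] in auto)
  moreover have "norm (complex_of_real (hc a 1 1 k) * complex_of_real \<bar>x\<bar> ^ k) = pochhammer a k / fact k * \<bar>x\<bar> ^ k" for k
  proof -
    have "hc a 1 1 k > 0" using hc_pos assms by simp
    then have "norm (complex_of_real (hc a 1 1 k) * complex_of_real \<bar>x\<bar> ^ k) = hc a 1 1 k * \<bar>x\<bar> ^ k"
      by (simp only: norm_mult norm_power norm_of_real abs_abs abs_of_pos)
    then show ?thesis by (simp only: hc_a11)
  qed
  ultimately show ?thesis by simp
qed

lemma integral_series:
  fixes n :: nat and a z :: real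
  assumes a: "a > 0" and z: "\<bar>z\<bar> < 1"
  shows "(\<lambda>k. pochhammer a k / fact k * z ^ k * mom n k) sums
           integral {0..pi} (\<lambda>\<theta>. sin \<theta> ^ n * (1 - z * cos \<theta>) powr (- a))"
proof -
  define f where "f = (\<lambda>k \<theta>. sin \<theta> ^ n * (pochhammer a k / fact k * (z * cos \<theta>) ^ k))"
  define M where "M = (\<lambda>k. pochhammer a k / fact k * \<bar>z\<bar> ^ k)"
  have bound: "norm (f k \<theta>) \<le> M k" for k \<theta>
  proof -
    define c where "c = pochhammer a k / fact k"
    have pk: "c \<ge> 0" unfolding c_def using a by (simp add: pochhammer_pos less_imp_le)
    have "norm (f k \<theta>) = \<bar>sin \<theta>\<bar> ^ n * (c * (\<bar>z\<bar> ^ k * \<bar>cos \<theta>\<bar> ^ k))"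
      unfolding f_def c_def[symmetric] using pk by (simp add: abs_mult power_abs power_mult_distrib)
    also have "\<dots> \<le> c * (\<bar>z\<bar> ^ k * \<bar>cos \<theta>\<bar> ^ k)"
      by (rule mult_left_le_one_le) (use pk in \<open>auto intro!: power_le_one simp: abs_sin_le_one\<close>)
    also have "\<dots> \<le> c * \<bar>z\<bar> ^ k"
      by (rule mult_left_mono[OF mult_right_le_one_le]) (use pk in \<open>auto intro!: power_le_one simp: abs_cos_le_one\<close>)
    finally show ?thesis unfolding M_def c_def by simp
  qed
  have sM: "summable M" unfolding M_def by (rule binom_abs_summable[OF a z])
  have ul: "uniform_limit {0..pi} (\<lambda>N \<theta>. \<Sum>k<N. f k \<theta>) (\<lambda>\<theta>. suminf (\<lambda>k. f k \<theta>)) sequentially"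
    by (rule Weierstrass_m_test[OF _ sM]) (use bound in auto)
  have lim: "suminf (\<lambda>k. f k \<theta>) = sin \<theta> ^ n * (1 - z * cos \<theta>) powr (- a)" for \<theta>
  proof -
    have "\<bar>z * cos \<theta>\<bar> < 1"
    proof -
      have "\<bar>z * cos \<theta>\<bar> = \<bar>z\<bar> * \<bar>cos \<theta>\<bar>" by (simp add: abs_mult)
      also have "\<dots> \<le> \<bar>z\<bar>" using abs_cos_le_one[of \<theta>] by (intro mult_left_le) auto
      finally show ?thesis using z by simp
    qed
    then have "(\<lambda>k. pochhammer a k / fact k * (z * cos \<theta>) ^ k) sums (1 - z * cos \<theta>) powr (- a)"
      by (rule binom_series[OF a])
    then have "(\<lambda>k. f k \<theta>) sums (sin \<theta> ^ n * (1 - z * cos \<theta>) powr (- a))"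
      unfolding f_def by (rule sums_mult)
    then show ?thesis by (rule sums_unique[symmetric])
  qed
  have cont: "continuous_on {0..pi} (\<lambda>\<theta>. \<Sum>k<N. f k \<theta>)" for N
    unfolding f_def by (intro continuous_intros)
  obtain I J where I: "\<And>N. ((\<lambda>\<theta>. \<Sum>k<N. f k \<theta>) has_integral I N) {0..pi}"
    and J: "((\<lambda>\<theta>. suminf (\<lambda>k. f k \<theta>)) has_integral J) {0..pi}" and IJ: "I \<longlonglongrightarrow> J"
    using uniform_limit_integral[OF ul cont] by auto
  have fi: "(f k has_integral (pochhammer a k / fact k * z ^ k * mom n k)) {0..pi}" for k
  proof -
    have "((\<lambda>\<theta>. sin \<theta> ^ n * cos \<theta> ^ k) has_integral mom n k) {0..pi}"
      unfolding mom_def using mom_integrable by (rule integrable_integral)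
    then have "((\<lambda>\<theta>. (pochhammer a k / fact k * z ^ k) * (sin \<theta> ^ n * cos \<theta> ^ k)) has_integral
          (pochhammer a k / fact k * z ^ k) * mom n k) {0..pi}"
      by (rule has_integral_mult_right)
    then show ?thesis unfolding f_def by (simp add: power_mult_distrib mult_ac)
  qed
  have "I N = (\<Sum>k<N. pochhammer a k / fact k * z ^ k * mom n k)" for N
    using has_integral_unique[OF I[of N] has_integral_sum[OF _ fi, of "{..<N}"]] by simp
  then have "I = (\<lambda>N. \<Sum>k<N. pochhammer a k / fact k * z ^ k * mom n k)" by (rule ext)
  then have "(\<lambda>N. \<Sum>k<N. pochhammer a k / fact k * z ^ k * mom n k) \<longlonglongrightarrow> J" using IJ by simp
  moreover have "J = integral {0..pi} (\<lambda>\<theta>. sin \<theta> ^ n * (1 - z * cos \<theta>) powr (- a))"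
    using J unfolding lim by (simp add: integral_unique)
  ultimately show ?thesis unfolding sums_def by simp
qed

lemma hg_of_real:
  assumes "a > 0" "b > 0" "c > 0" "\<bar>x\<bar> < 1"
  shows "(\<lambda>j. hc a b c j * x ^ j) sums Re (hg a b c (of_real x))"
    and "hg a b c (of_real x) = of_real (Re (hg a b c (of_real x)))"
proof -
  have "summable (\<lambda>j. norm (complex_of_real (hc a b c j) * complex_of_real x ^ j))"
    by (rule abs_summable_in_conv_radius) (use assms conv_radius_hc[of a b c] in auto)
  then have "summable (\<lambda>j. \<bar>hc a b c j * x ^ j\<bar>)"
    by (simp add: norm_mult norm_power abs_mult power_abs)
  then have sr: "summable (\<lambda>j. hc a b c j * x ^ j)" by (rule summable_rabs_cancel)
  then obtain S where S: "(\<lambda>j. hc a b c j * x ^ j) sums S" by (auto simp: summable_def)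
  then have "(\<lambda>j. complex_of_real (hc a b c j * x ^ j)) sums of_real S" by (simp only: sums_of_real_iff)
  then have "(\<lambda>j. hcc a b c j * complex_of_real x ^ j) sums of_real S" by (simp add: hcc_def)
  moreover have "(\<lambda>j. hcc a b c j * complex_of_real x ^ j) sums hg a b c (of_real x)"
    unfolding hg_def ps_def using hcc_summable[OF assms(1-3), of "of_real x"] assms(4)
    by (simp add: summable_sums)
  ultimately have e: "hg a b c (of_real x) = of_real S" using sums_unique2 by blast
  show "(\<lambda>j. hc a b c j * x ^ j) sums Re (hg a b c (of_real x))" using S e by simp
  show "hg a b c (of_real x) = of_real (Re (hg a b c (of_real x)))" using e by simp
qed

lemma denom_pos:
  fixes t u :: real
  assumes "\<bar>t\<bar> < 1" "\<bar>u\<bar> \<le> 1"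
  shows "1 + t\<^sup>2 - 2 * t * u > 0"
proof -
  have "2 * t * u \<le> 2 * \<bar>t\<bar>"
  proof -
    have "2 * t * u \<le> \<bar>2 * t * u\<bar>" by simp
    also have "\<dots> = 2 * \<bar>t\<bar> * \<bar>u\<bar>" by (simp add: abs_mult)
    also have "\<dots> \<le> 2 * \<bar>t\<bar> * 1" using assms(2) by (intro mult_left_mono) auto
    finally show ?thesis by simp
  qed
  moreover have "(1 - \<bar>t\<bar>)\<^sup>2 > 0" using assms(1) by simp
  moreover have "(1 - \<bar>t\<bar>)\<^sup>2 = 1 + t\<^sup>2 - 2 * \<bar>t\<bar>" by (simp add: power2_eq_square algebra_simps)
  ultimately show ?thesis by linarith
qed

lemma z_bound:
  fixes t :: real
  assumes "\<bar>t\<bar> < 1"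
  shows "\<bar>2 * t / (1 + t\<^sup>2)\<bar> < 1"
proof -
  have p: "1 + t\<^sup>2 > 0" by (simp add: add_pos_nonneg)
  have "(1 - \<bar>t\<bar>)\<^sup>2 > 0" using assms by simp
  moreover have "(1 - \<bar>t\<bar>)\<^sup>2 = 1 + t\<^sup>2 - 2 * \<bar>t\<bar>" by (simp add: power2_eq_square algebra_simps)
  ultimately have l: "\<bar>2 * t\<bar> < 1 + t\<^sup>2" by (simp add: abs_mult)
  have "\<bar>2 * t / (1 + t\<^sup>2)\<bar> = \<bar>2 * t\<bar> / (1 + t\<^sup>2)" using p by (simp add: abs_divide)
  also have "\<dots> < 1" using l p by simp
  finally show ?thesis .
qed

lemma Phi_formula:
  fixes N :: nat and s t :: real
  assumes N: "N \<ge> 2" and aN: "2 * s < real N" and t: "\<bar>t\<bar> < 1"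
  shows "Phi N s t = sphere_measure (N - 1) * mom (N - 2) 0 * (1 + t\<^sup>2) powr (- (real N / 2 - s)) *
           Re (hg ((real N / 2 - s) / 2) ((real N / 2 - s + 1) / 2) (real N / 2) (of_real ((2 * t / (1 + t\<^sup>2))\<^sup>2)))"
proof -
  define a where "a = real N / 2 - s"
  define z where "z = 2 * t / (1 + t\<^sup>2)"
  define n where "n = N - 2"
  have a: "a > 0" using aN unfolding a_def by simp
  have z: "\<bar>z\<bar> < 1" unfolding z_def by (rule z_bound[OF t])
  have p1: "1 + t\<^sup>2 > 0" by (simp add: add_pos_nonneg)
  have Nn: "(real n + 2) / 2 = real N / 2" using N unfolding n_def by (simp add: of_nat_diff)
  have pos: "\<And>\<theta>. 1 + t\<^sup>2 - 2 * t * cos \<theta> > 0" using denom_pos[OF t] abs_cos_le_one by blast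
  have step1: "integral {-1..1} (\<lambda>u. (1 - u\<^sup>2) powr ((real N - 3) / 2) / (1 + t\<^sup>2 - 2 * t * u) powr a)
       = integral {0..pi} (\<lambda>\<theta>. sin \<theta> ^ n / (1 + t\<^sup>2 - 2 * t * cos \<theta>) powr a)"
    unfolding n_def by (rule change_to_theta[OF N pos])
  have integrand: "sin \<theta> ^ n / (1 + t\<^sup>2 - 2 * t * cos \<theta>) powr a =
      (1 + t\<^sup>2) powr (- a) * (sin \<theta> ^ n * (1 - z * cos \<theta>) powr (- a))" for \<theta>
  proof -
    have e: "1 + t\<^sup>2 - 2 * t * cos \<theta> = (1 + t\<^sup>2) * (1 - z * cos \<theta>)"
      unfolding z_def using p1 by (simp add: field_simps)
    have q: "1 - z * cos \<theta> > 0" using pos[of \<theta>] p1 unfolding e by (simp add: zero_less_mult_iff)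
    have "(1 + t\<^sup>2 - 2 * t * cos \<theta>) powr a = (1 + t\<^sup>2) powr a * (1 - z * cos \<theta>) powr a"
      unfolding e using p1 q by (simp add: powr_mult)
    then show ?thesis using p1 q by (simp add: powr_minus field_simps)
  qed
  have step2: "integral {0..pi} (\<lambda>\<theta>. sin \<theta> ^ n / (1 + t\<^sup>2 - 2 * t * cos \<theta>) powr a)
       = (1 + t\<^sup>2) powr (- a) * integral {0..pi} (\<lambda>\<theta>. sin \<theta> ^ n * (1 - z * cos \<theta>) powr (- a))"
    unfolding integrand by (rule integral_mult_right)
  have s3: "(\<lambda>k. pochhammer a k / fact k * z ^ k * mom n k) sums
           integral {0..pi} (\<lambda>\<theta>. sin \<theta> ^ n * (1 - z * cos \<theta>) powr (- a))"
    by (rule integral_series[OF a z])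
  have s4: "(\<lambda>j. pochhammer a (2 * j) / fact (2 * j) * z ^ (2 * j) * mom n (2 * j)) sums
           integral {0..pi} (\<lambda>\<theta>. sin \<theta> ^ n * (1 - z * cos \<theta>) powr (- a))"
  proof -
    have sm: "strict_mono (\<lambda>j::nat. 2 * j)" by (rule strict_monoI) simp
    have "k \<notin> range (\<lambda>j. 2 * j) \<Longrightarrow> pochhammer a k / fact k * z ^ k * mom n k = 0" for k
    proof -
      assume "k \<notin> range (\<lambda>j. 2 * j)"
      then have "odd k" by (auto elim!: evenE)
      then obtain j where "k = 2 * j + 1" by (auto elim!: oddE)
      then show ?thesis using mom_odd by simp
    qed
    then have "(\<lambda>j. pochhammer a (2 * j) / fact (2 * j) * z ^ (2 * j) * mom n (2 * j)) sums
           integral {0..pi} (\<lambda>\<theta>. sin \<theta> ^ n * (1 - z * cos \<theta>) powr (- a)) \<longleftrightarrow>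
         (\<lambda>k. pochhammer a k / fact k * z ^ k * mom n k) sums
           integral {0..pi} (\<lambda>\<theta>. sin \<theta> ^ n * (1 - z * cos \<theta>) powr (- a))"
      by (intro sums_mono_reindex[OF sm]) blast
    then show ?thesis using s3 by blast
  qed
  have s5: "(\<lambda>j. mom n 0 * (hc (a / 2) ((a + 1) / 2) (real N / 2) j * (z\<^sup>2) ^ j)) sums
           integral {0..pi} (\<lambda>\<theta>. sin \<theta> ^ n * (1 - z * cos \<theta>) powr (- a))"
  proof -
    have "pochhammer a (2 * j) / fact (2 * j) * z ^ (2 * j) * mom n (2 * j) =
          mom n 0 * (hc (a / 2) ((a + 1) / 2) (real N / 2) j * (z\<^sup>2) ^ j)" for j
    proof -
      have c: "pochhammer a (2 * j) / fact (2 * j) * mom n (2 * j) = mom n 0 * hc (a / 2) ((a + 1) / 2) (real N / 2) j"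
        using coef_even[of a j n] unfolding Nn .
      have zz: "z ^ (2 * j) = (z\<^sup>2) ^ j" by (rule power_mult)
      have "pochhammer a (2 * j) / fact (2 * j) * z ^ (2 * j) * mom n (2 * j) =
            (pochhammer a (2 * j) / fact (2 * j) * mom n (2 * j)) * (z\<^sup>2) ^ j"
        unfolding zz by (simp only: mult_ac)
      then show ?thesis unfolding c by (simp only: mult_ac)
    qed
    then show ?thesis using s4 by simp
  qed
  have w: "\<bar>z\<^sup>2\<bar> < 1" using z by (simp add: abs_square_less_1)
  have s6: "(\<lambda>j. mom n 0 * (hc (a / 2) ((a + 1) / 2) (real N / 2) j * (z\<^sup>2) ^ j)) sums
       (mom n 0 * Re (hg (a / 2) ((a + 1) / 2) (real N / 2) (of_real (z\<^sup>2))))"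
    by (rule sums_mult, rule hg_of_real(1)) (use a w N in auto)
  have I: "integral {0..pi} (\<lambda>\<theta>. sin \<theta> ^ n * (1 - z * cos \<theta>) powr (- a)) =
        mom n 0 * Re (hg (a / 2) ((a + 1) / 2) (real N / 2) (of_real (z\<^sup>2)))"
    using sums_unique2[OF s5 s6] .
  have "Phi N s t = sphere_measure (N - 1) *
     integral {-1..1} (\<lambda>u. (1 - u\<^sup>2) powr ((real N - 3) / 2) / (1 + t\<^sup>2 - 2 * t * u) powr a)"
    unfolding Phi_def a_def ..
  also have "\<dots> = sphere_measure (N - 1) * ((1 + t\<^sup>2) powr (- a) *
      (mom n 0 * Re (hg (a / 2) ((a + 1) / 2) (real N / 2) (of_real (z\<^sup>2)))))"
    unfolding step1 step2 I ..
  finally show ?thesis unfolding a_def z_def n_def by (simp only: mult_ac)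
qed

section \<open>From holomorphic to real\<close>

lemma re_of_real_deriv:
  assumes "(G has_field_derivative G') (at (complex_of_real x))"
  shows "((\<lambda>x. Re (G (of_real x))) has_real_derivative Re G') (at x)"
proof -
  have d1: "(complex_of_real has_derivative complex_of_real) (at x)"
    by (rule bounded_linear.has_derivative[OF bounded_linear_of_real has_derivative_ident])
  have d2: "(G has_derivative (\<lambda>h. G' * h)) (at (complex_of_real x))"
    using assms by (simp add: has_field_derivative_def mult_commute_abs)
  have "((\<lambda>x. G (of_real x)) has_derivative (\<lambda>h. G' * of_real h)) (at x)"
    using has_derivative_compose[OF d1 d2] by (simp add: o_def)
  then have "((\<lambda>x. Re (G (of_real x))) has_derivative (\<lambda>h. Re (G' * of_real h))) (at x)"
    by (rule has_derivative_Re)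
  moreover have "(\<lambda>h. Re (G' * of_real h)) = (\<lambda>h. Re G' * h)" by (auto simp: mult.commute)
  ultimately show ?thesis by (simp add: has_field_derivative_def mult_commute_abs)
qed

lemma smooth_from_holo:
  assumes F: "F holomorphic_on U" and U: "open U" and S: "\<And>x. x \<in> S \<Longrightarrow> complex_of_real x \<in> U"
  shows "smooth_on (\<lambda>x. Re (F (of_real x))) S"
  unfolding smooth_on_def
proof (intro exI conjI allI ballI)
  show "(\<lambda>n x. Re ((deriv ^^ n) F (of_real x))) 0 = (\<lambda>x. Re (F (of_real x)))" by simp
  fix n x assume x: "x \<in> S"
  have h: "(deriv ^^ n) F holomorphic_on U" by (rule holomorphic_higher_deriv[OF F U])
  have "((deriv ^^ n) F has_field_derivative deriv ((deriv ^^ n) F) (of_real x)) (at (of_real x))"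
    by (rule holomorphic_derivI[OF h U S[OF x]])
  then show "((\<lambda>x. Re ((deriv ^^ n) F (of_real x))) has_real_derivative Re ((deriv ^^ Suc n) F (of_real x))) (at x)"
    using re_of_real_deriv by simp
qed

lemma analytic_from_holo:
  assumes F: "F holomorphic_on U" and U: "open U" and S: "\<And>x. x \<in> S \<Longrightarrow> complex_of_real x \<in> U"
    and Sopen: "open S" and eq: "\<And>x. x \<in> S \<Longrightarrow> f x = Re (F (of_real x))"
  shows "real_analytic_on f S"
  unfolding real_analytic_on_def
proof
  fix x0 assume x0: "x0 \<in> S"
  obtain r1 where r1: "r1 > 0" "ball (complex_of_real x0) r1 \<subseteq> U"
    using U S[OF x0] open_contains_ball by blast
  obtain r2 where r2: "r2 > 0" "ball x0 r2 \<subseteq> S"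
    using Sopen x0 open_contains_ball by blast
  define r where "r = min r1 r2"
  have r: "r > 0" unfolding r_def using r1 r2 by simp
  define c where "c = (\<lambda>n. Re ((deriv ^^ n) F (of_real x0) / fact n))"
  have "\<forall>x. \<bar>x - x0\<bar> < r \<longrightarrow> (\<lambda>n. c n * (x - x0) ^ n) sums f x"
  proof (intro allI impI)
    fix x assume x: "\<bar>x - x0\<bar> < r"
    have hb: "F holomorphic_on ball (complex_of_real x0) r1" using F r1(2) holomorphic_on_subset by blast
    have "complex_of_real x \<in> ball (complex_of_real x0) r1"
      using x unfolding r_def by (simp add: dist_norm abs_minus_commute flip: of_real_diff)
    then have "(\<lambda>n. (deriv ^^ n) F (of_real x0) / fact n * (of_real x - of_real x0) ^ n) sums F (of_real x)"
      by (rule holomorphic_power_series[OF hb])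
    then have "(\<lambda>n. Re ((deriv ^^ n) F (of_real x0) / fact n * (of_real x - of_real x0) ^ n)) sums Re (F (of_real x))"
      by (rule sums_Re)
    moreover have "Re ((deriv ^^ n) F (of_real x0) / fact n * (of_real x - of_real x0) ^ n) = c n * (x - x0) ^ n" for n
    proof -
      have "(complex_of_real x - complex_of_real x0) ^ n = complex_of_real ((x - x0) ^ n)" by simp
      then have "(deriv ^^ n) F (of_real x0) / fact n * (of_real x - of_real x0) ^ n =
         ((deriv ^^ n) F (of_real x0) / fact n) * complex_of_real ((x - x0) ^ n)" by simp
      moreover have "Re (W * complex_of_real y) = Re W * y" for W y by simp
      ultimately show ?thesis unfolding c_def by presburger
    qed
    moreover have "x \<in> S" using x r2(2) unfolding r_def by (auto simp: dist_norm subset_iff abs_minus_commute)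
    ultimately show "(\<lambda>n. c n * (x - x0) ^ n) sums f x" using eq by simp
  qed
  then show "\<exists>r>0. \<exists>a. \<forall>x. \<bar>x - x0\<bar> < r \<longrightarrow> (\<lambda>n. a n * (x - x0) ^ n) sums f x"
    using r by blast
qed

lemma sphere_measure_pos: "n \<ge> 1 \<Longrightarrow> sphere_measure n > 0"
  unfolding sphere_measure_def by (intro divide_pos_pos mult_pos_pos) auto

lemma Phi_inversion:
  fixes N :: nat and s t :: real
  assumes t: "t > 0"
  shows "Phi N s (1 / t) = t powr (real N - 2 * s) * Phi N s t"
proof -
  define a where "a = real N / 2 - s"
  have "integral {-1..1} (\<lambda>u. (1 - u\<^sup>2) powr ((real N - 3) / 2) / (1 + (1 / t)\<^sup>2 - 2 * (1 / t) * u) powr a)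
      = integral {-1..1} (\<lambda>u. t powr (real N - 2 * s) * ((1 - u\<^sup>2) powr ((real N - 3) / 2) / (1 + t\<^sup>2 - 2 * t * u) powr a))"
  proof (rule integral_cong)
    fix u :: real assume u: "u \<in> {-1..1}"
    have nn: "1 + t\<^sup>2 - 2 * t * u \<ge> 0"
    proof -
      have "2 * t * u \<le> 2 * t" using u t by (simp add: mult_left_le)
      moreover have "(1 - t)\<^sup>2 \<ge> 0" by simp
      moreover have "(1 - t)\<^sup>2 = 1 + t\<^sup>2 - 2 * t" by (simp add: power2_eq_square algebra_simps)
      ultimately show ?thesis by linarith
    qed
    have e: "1 + (1 / t)\<^sup>2 - 2 * (1 / t) * u = (1 + t\<^sup>2 - 2 * t * u) / t\<^sup>2"
      using t by (simp add: field_simps power2_eq_square)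
    have tp: "(t\<^sup>2) powr a = t powr (real N - 2 * s)"
    proof -
      have "(t\<^sup>2) powr a = (t powr 2) powr a" using t by (simp add: powr_realpow)
      also have "\<dots> = t powr (2 * a)" by (simp add: powr_powr)
      finally show ?thesis unfolding a_def by (simp add: algebra_simps)
    qed
    have t2: "t\<^sup>2 \<ge> 0" by simp
    have d: "(1 + (1 / t)\<^sup>2 - 2 * (1 / t) * u) powr a = (1 + t\<^sup>2 - 2 * t * u) powr a / t powr (real N - 2 * s)"
      unfolding e powr_divide tp ..
    show "(1 - u\<^sup>2) powr ((real N - 3) / 2) / (1 + (1 / t)\<^sup>2 - 2 * (1 / t) * u) powr a =
        t powr (real N - 2 * s) * ((1 - u\<^sup>2) powr ((real N - 3) / 2) / (1 + t\<^sup>2 - 2 * t * u) powr a)"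
      unfolding d by (simp add: divide_divide_eq_right mult.commute mult.left_commute)
  qed
  then show ?thesis unfolding Phi_def a_def[symmetric] integral_mult_right by (simp only: mult_ac)
qed

lemma hg_re_ge_1:
  assumes "a > 0" "b > 0" "c > 0" "0 \<le> x" "x < 1"
  shows "Re (hg a b c (of_real x)) \<ge> 1"
proof -
  have S: "(\<lambda>j. hc a b c j * x ^ j) sums Re (hg a b c (of_real x))"
    by (rule hg_of_real(1)) (use assms in auto)
  have nn: "\<And>j. 0 \<le> hc a b c j * x ^ j" using hc_pos[OF assms(1-3)] assms(4) by (simp add: less_imp_le)
  have "(\<Sum>j\<in>{0}. hc a b c j * x ^ j) \<le> suminf (\<lambda>j. hc a b c j * x ^ j)"
    by (rule sum_le_suminf) (use S nn in \<open>auto simp: sums_iff\<close>)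
  then show ?thesis using S by (simp add: sums_iff)
qed

lemma hg_holo:
  assumes "a > 0" "b > 0" "c > 0"
  shows "hg a b c holomorphic_on ball 0 1"
  using hg_sol[OF assms] unfolding hge_sol_def holomorphic_on_def field_differentiable_def
  by (auto intro: has_field_derivative_at_within)

lemma hl_holo:
  assumes "a > 0" "b > 0"
  shows "hl a b holomorphic_on ball 0 1"
proof -
  have sm: "\<And>z. norm z < 1 \<Longrightarrow> summable (\<lambda>n. hlc a b n * z ^ n)" using hlc_summable assms by blast
  show ?thesis unfolding holomorphic_on_def field_differentiable_def hl_def
  proof
    fix x :: complex assume "x \<in> ball 0 1"
    then have "norm x < 1" by simp
    then show "\<exists>f'. (ps (hlc a b) has_field_derivative f') (at x within ball 0 1)"
      using ps_deriv[OF sm] has_field_derivative_at_within by blast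
  qed
qed

lemma hg_comp:
  assumes "a > 0" "b > 0" "c > 0" "g holomorphic_on U" "\<And>t. t \<in> U \<Longrightarrow> g t \<in> ball 0 1"
  shows "(\<lambda>t. hg a b c (g t)) holomorphic_on U"
proof -
  have "g ` U \<subseteq> ball 0 1" using assms(5) by blast
  from holomorphic_on_compose_gen[OF assms(4) hg_holo[OF assms(1-3)] this] show ?thesis by (simp add: o_def)
qed

lemma hl_comp:
  assumes "a > 0" "b > 0" "g holomorphic_on U" "\<And>t. t \<in> U \<Longrightarrow> g t \<in> ball 0 1"
  shows "(\<lambda>t. hl a b (g t)) holomorphic_on U"
proof -
  have "g ` U \<subseteq> ball 0 1" using assms(4) by blast
  from holomorphic_on_compose_gen[OF assms(3) hl_holo[OF assms(1-2)] this] show ?thesis by (simp add: o_def)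
qed

lemma Re_pos_not_nonpos: "Re z > 0 \<Longrightarrow> z \<notin> \<real>\<^sub>\<le>\<^sub>0"
  by (auto simp: complex_nonpos_Reals_iff)

lemma part_i:
  fixes N :: nat and s :: real
  assumes N: "N \<ge> 2" and s: "0 < s" "s \<le> 1" and aN: "2 * s < real N"
  shows "real_analytic_on (Phi N s) {-1<..<1} \<and> (\<forall>t\<in>{-1<..<1}. Phi N s t > 0)"
proof
  define a where "a = real N / 2 - s"
  define C where "C = sphere_measure (N - 1) * mom (N - 2) 0"
  have a: "a > 0" using aN unfolding a_def by simp
  have C: "C > 0" unfolding C_def using N by (intro mult_pos_pos sphere_measure_pos mom_0_pos) auto
  have pars: "a / 2 > 0" "(a + 1) / 2 > 0" "real N / 2 > 0" using a N by auto
  have form: "Phi N s t = C * (1 + t\<^sup>2) powr (- a) * Re (hg (a / 2) ((a + 1) / 2) (real N / 2) (of_real ((2 * t / (1 + t\<^sup>2))\<^sup>2)))"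
    if t: "\<bar>t\<bar> < 1" for t
    using Phi_formula[OF N aN t] unfolding C_def a_def by simp
  have wb: "0 \<le> (2 * t / (1 + t\<^sup>2))\<^sup>2 \<and> (2 * t / (1 + t\<^sup>2))\<^sup>2 < 1" if t: "\<bar>t\<bar> < 1" for t :: real
    using z_bound[OF t] by (simp add: abs_square_less_1)
  show "\<forall>t\<in>{-1<..<1}. Phi N s t > 0"
  proof
    fix t :: real assume "t \<in> {-1<..<1}"
    then have t: "\<bar>t\<bar> < 1" by auto
    have "Re (hg (a / 2) ((a + 1) / 2) (real N / 2) (of_real ((2 * t / (1 + t\<^sup>2))\<^sup>2))) \<ge> 1"
      by (rule hg_re_ge_1) (use pars wb[OF t] in auto)
    moreover have "1 + t\<^sup>2 > 0" by (simp add: add_pos_nonneg)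
    then have "(1 + t\<^sup>2) powr (- a) > 0" by simp
    ultimately show "Phi N s t > 0" unfolding form[OF t] using C by simp
  qed
  define W where "W = (\<lambda>t::complex. (2 * t / (1 + t\<^sup>2))\<^sup>2)"
  define S0 where "S0 = {t::complex. 0 < Re (1 + t\<^sup>2)}"
  define U where "U = S0 \<inter> W -` ball 0 1"
  have S0o: "open S0" unfolding S0_def by (intro open_Collect_less continuous_intros)
  have nz: "1 + t\<^sup>2 \<noteq> 0" if "t \<in> S0" for t
  proof -
    have "Re (1 + t\<^sup>2) > 0" using that unfolding S0_def by simp
    then show ?thesis by (metis less_irrefl zero_complex.sel(1))
  qed
  have nn: "1 + t\<^sup>2 \<notin> \<real>\<^sub>\<le>\<^sub>0" if "t \<in> S0" for t
  proof -
    have "Re (1 + t\<^sup>2) > 0" using that unfolding S0_def by simp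
    then show ?thesis by (rule Re_pos_not_nonpos)
  qed
  have cW: "continuous_on S0 W" unfolding W_def by (intro continuous_intros) (use nz in auto)
  have Uo: "open U" unfolding U_def by (rule continuous_open_preimage[OF cW S0o open_ball])
  define F where "F = (\<lambda>t. of_real C * ((1 + t\<^sup>2) powr (- of_real a) * hg (a / 2) ((a + 1) / 2) (real N / 2) (W t)))"
  have WU: "W holomorphic_on U" unfolding W_def U_def by (intro holomorphic_intros) (use nz in auto)
  have FU: "F holomorphic_on U" unfolding F_def
    by (intro holomorphic_intros hg_comp[OF pars WU]) (use nn in \<open>auto simp: U_def\<close>)
  have inU: "complex_of_real x \<in> U" if "x \<in> {-1<..<1}" for x
  proof -
    have t: "\<bar>x\<bar> < 1" using that by auto
    have "W (of_real x) = of_real ((2 * x / (1 + x\<^sup>2))\<^sup>2)" unfolding W_def by simp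
    then have "W (of_real x) \<in> ball 0 1" using wb[OF t] by (simp only: mem_ball_0 norm_of_real) simp
    moreover have "of_real x \<in> S0" unfolding S0_def by (simp add: add_pos_nonneg)
    ultimately show ?thesis unfolding U_def by simp
  qed
  have eq: "Phi N s x = Re (F (of_real x))" if "x \<in> {-1<..<1}" for x
  proof -
    have t: "\<bar>x\<bar> < 1" using that by auto
    have W: "W (of_real x) = of_real ((2 * x / (1 + x\<^sup>2))\<^sup>2)" unfolding W_def by simp
    have p: "(1 + (complex_of_real x)\<^sup>2) powr (- complex_of_real a) = of_real ((1 + x\<^sup>2) powr (- a))"
    proof -
      have "(1 + (complex_of_real x)\<^sup>2) = of_real (1 + x\<^sup>2)" by simp
      moreover have "(0::real) \<le> 1 + x\<^sup>2" by (simp add: add_nonneg_nonneg)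
      ultimately show ?thesis using powr_of_real[of "1 + x\<^sup>2" "- a"] by simp
    qed
    show ?thesis unfolding form[OF t] F_def W p by simp
  qed
  show "real_analytic_on (Phi N s) {-1<..<1}"
    by (rule analytic_from_holo[OF FU Uo inU _ eq]) auto
qed

definition Rf :: "complex \<Rightarrow> complex" where "Rf t = ((1 - t\<^sup>2) / (1 + t\<^sup>2))\<^sup>2"
definition Qf :: "complex \<Rightarrow> complex" where "Qf t = (1 + t) / (1 + t\<^sup>2)"
definition U2 :: "complex set" where
  "U2 = ({t. 0 < Re t \<and> 0 < Re (1 + t\<^sup>2)} \<inter> Rf -` ball 0 1) \<inter> Qf -` {z. 0 < Re z}"

lemma U2_facts:
  shows "open U2" "\<And>x. x > 0 \<Longrightarrow> complex_of_real x \<in> U2"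
    "Rf holomorphic_on U2" "\<And>t. t \<in> U2 \<Longrightarrow> Rf t \<in> ball 0 1"
    "Qf holomorphic_on U2" "\<And>t. t \<in> U2 \<Longrightarrow> Qf t \<notin> \<real>\<^sub>\<le>\<^sub>0"
    "\<And>t. t \<in> U2 \<Longrightarrow> 1 + t\<^sup>2 \<notin> \<real>\<^sub>\<le>\<^sub>0"
proof -
  define S1 where "S1 = {t::complex. 0 < Re t \<and> 0 < Re (1 + t\<^sup>2)}"
  have S1o: "open S1" unfolding S1_def by (intro open_Collect_conj open_Collect_less continuous_intros)
  have nz: "1 + t\<^sup>2 \<noteq> 0" if "t \<in> S1" for t
  proof -
    have "Re (1 + t\<^sup>2) > 0" using that unfolding S1_def by simp
    then show ?thesis by (metis less_irrefl zero_complex.sel(1))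
  qed
  have cR: "continuous_on S1 Rf" unfolding Rf_def by (intro continuous_intros) (use nz in auto)
  have o1: "open (S1 \<inter> Rf -` ball 0 1)" by (rule continuous_open_preimage[OF cR S1o open_ball])
  have cQ: "continuous_on (S1 \<inter> Rf -` ball 0 1) Qf" unfolding Qf_def by (intro continuous_intros) (use nz in auto)
  have o2: "open {z::complex. 0 < Re z}" by (intro open_Collect_less continuous_intros)
  show "open U2" unfolding U2_def S1_def[symmetric] by (rule continuous_open_preimage[OF cQ o1 o2])
  have U2S1: "U2 \<subseteq> S1" unfolding U2_def S1_def by auto
  show "Rf holomorphic_on U2" unfolding Rf_def by (intro holomorphic_intros) (use nz U2S1 in auto)
  show "Qf holomorphic_on U2" unfolding Qf_def by (intro holomorphic_intros) (use nz U2S1 in auto)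
  show "\<And>t. t \<in> U2 \<Longrightarrow> Rf t \<in> ball 0 1" unfolding U2_def by auto
  show "\<And>t. t \<in> U2 \<Longrightarrow> Qf t \<notin> \<real>\<^sub>\<le>\<^sub>0" unfolding U2_def using Re_pos_not_nonpos by blast
  show "\<And>t. t \<in> U2 \<Longrightarrow> 1 + t\<^sup>2 \<notin> \<real>\<^sub>\<le>\<^sub>0"
  proof -
    fix t assume "t \<in> U2"
    then have "Re (1 + t\<^sup>2) > 0" unfolding U2_def by simp
    then show "1 + t\<^sup>2 \<notin> \<real>\<^sub>\<le>\<^sub>0" by (rule Re_pos_not_nonpos)
  qed
  fix x :: real assume x: "x > 0"
  have p: "1 + x\<^sup>2 > 0" by (simp add: add_pos_nonneg)
  have R: "Rf (of_real x) = of_real (((1 - x\<^sup>2) / (1 + x\<^sup>2))\<^sup>2)" unfolding Rf_def by simp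
  have Q: "Qf (of_real x) = of_real ((1 + x) / (1 + x\<^sup>2))" unfolding Qf_def by simp
  have "\<bar>(1 - x\<^sup>2) / (1 + x\<^sup>2)\<bar> < 1"
  proof -
    have "\<bar>1 - x\<^sup>2\<bar> < 1 + x\<^sup>2" using x by (auto simp: abs_less_iff)
    then show ?thesis using p by (simp add: abs_divide)
  qed
  then have r: "((1 - x\<^sup>2) / (1 + x\<^sup>2))\<^sup>2 < 1" by (simp add: abs_square_less_1)
  have q: "(1 + x) / (1 + x\<^sup>2) > 0" using x p by simp
  have "Rf (of_real x) \<in> ball 0 1" unfolding R by (simp only: mem_ball_0 norm_of_real) (use r in simp)
  moreover have "0 < Re (Qf (of_real x))" unfolding Q using q by simp
  moreover have "0 < Re (1 + (complex_of_real x)\<^sup>2)" using p by simp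
  ultimately show "complex_of_real x \<in> U2"
    unfolding U2_def using x by simp
qed

lemma r_facts:
  fixes t :: real
  assumes t: "0 < t" "t < 1"
  defines "r \<equiv> ((1 - t\<^sup>2) / (1 + t\<^sup>2))\<^sup>2" and "q \<equiv> (1 + t) / (1 + t\<^sup>2)"
  shows "(2 * t / (1 + t\<^sup>2))\<^sup>2 = 1 - r" "0 < r" "r < 1" "q > 0"
    "\<And>e. r powr e = (1 - t) powr (2 * e) * q powr (2 * e)"
    "ln r = 2 * ln (1 - t) + 2 * ln q"
proof -
  have p: "1 + t\<^sup>2 > 0" by (simp add: add_pos_nonneg)
  define D where "D = 1 + t\<^sup>2"
  have D: "D > 0" unfolding D_def using p .
  have e: "D\<^sup>2 - (1 - t\<^sup>2)\<^sup>2 = (2 * t)\<^sup>2" unfolding D_def by algebra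
  have "1 - r = (D\<^sup>2 - (1 - t\<^sup>2)\<^sup>2) / D\<^sup>2" unfolding r_def D_def[symmetric] using D
    by (simp add: power_divide field_simps)
  also have "\<dots> = (2 * t / D)\<^sup>2" unfolding e by (simp add: power_divide)
  finally show "(2 * t / (1 + t\<^sup>2))\<^sup>2 = 1 - r" unfolding D_def by simp
  show qp: "q > 0" unfolding q_def using t p by simp
  have pq: "(1 - t\<^sup>2) / (1 + t\<^sup>2) = (1 - t) * q" unfolding q_def using p
    by (simp add: field_simps power2_eq_square)
  have pp: "(1 - t) * q > 0" using t qp by simp
  have r2: "r = ((1 - t) * q)\<^sup>2" unfolding r_def pq ..
  show "0 < r" unfolding r2 using t qp by simp
  have "(1 - t) * q < 1"
  proof -
    have "(1 - t\<^sup>2) < 1 + t\<^sup>2" using t by simp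
    then have "(1 - t\<^sup>2) / (1 + t\<^sup>2) < 1" using p by simp
    then show ?thesis unfolding pq .
  qed
  then show "r < 1" unfolding r2 using pp by (simp add: power_less_one_iff)
  fix e :: real
  have "r powr e = (((1 - t) * q) powr 2) powr e" unfolding r2 using pp by (simp add: powr_realpow)
  also have "\<dots> = ((1 - t) * q) powr (2 * e)" by (simp add: powr_powr)
  also have "\<dots> = (1 - t) powr (2 * e) * q powr (2 * e)" by (rule powr_mult)
  finally show "r powr e = (1 - t) powr (2 * e) * q powr (2 * e)" .
  show "ln r = 2 * ln (1 - t) + 2 * ln q"
    unfolding r2 using t qp by (simp add: ln_mult ln_realpow)
qed

lemma re_alg:
  fixes k1 y1 k2 y2 :: complex and c p kv qv :: real
  shows "c * p * Re (k1 * y1 + k2 * (of_real (kv * qv) * y2)) =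
     Re (of_real c * (of_real p * (k1 * y1))) + kv * Re (of_real c * (of_real p * (k2 * (of_real qv * y2))))"
proof -
  have e: "\<And>x z. Re (complex_of_real x * z) = x * Re z" by simp
  have "k2 * (of_real (kv * qv) * y2) = of_real kv * (k2 * (of_real qv * y2))" by (simp add: algebra_simps)
  then show ?thesis by (simp only: e plus_complex.sel) (simp add: algebra_simps)
qed

lemma part_ii_nonlog:
  fixes N :: nat and s :: real
  assumes N: "N \<ge> 2" and s: "0 < s" "s \<le> 1" "s \<noteq> 1/2" and aN: "2 * s < real N"
  shows "\<exists>\<phi>1 \<phi>2 :: real \<Rightarrow> real.
               smooth_on \<phi>1 {0<..<sqrt 2} \<and> smooth_on \<phi>2 {0<..<sqrt 2} \<and>
               (\<forall>t\<in>{0<..<1}. Phi N s t = \<phi>1 t + K s (1 - t) * \<phi>2 t)"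
proof -
  define a where "a = real N / 2 - s"
  define C where "C = sphere_measure (N - 1) * mom (N - 2) 0"
  define A where "A = a / 2"
  define B where "B = (a + 1) / 2"
  define G where "G = real N / 2"
  define c1 where "c1 = A + B + 1 - G"
  have a: "a > 0" using aN unfolding a_def by simp
  have c1v: "c1 = 3 / 2 - s" unfolding c1_def A_def B_def G_def a_def by (simp add: field_simps)
  have pos: "A > 0" "B > 0" "G > 0" "c1 > 0" "c1 \<noteq> 1" "A - c1 + 1 > 0" "B - c1 + 1 > 0" "2 - c1 > 0"
    using a N s aN unfolding c1v A_def B_def G_def a_def by (auto simp: field_simps)
  obtain k1 k2 where kk: "\<And>r. r \<in> ball (1/2) (1/2) \<Longrightarrow> hg A B G (1 - r) =
     k1 * hg A B c1 r + k2 * (r powr (1 - of_real c1) * hg (A - c1 + 1) (B - c1 + 1) (2 - c1) r)"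
    using connection_nonlog[OF c1_def pos] by blast
  define \<Phi>1 where "\<Phi>1 = (\<lambda>t. of_real C * ((1 + t\<^sup>2) powr (- of_real a) * (k1 * hg A B c1 (Rf t))))"
  define \<Phi>2 where "\<Phi>2 = (\<lambda>t. of_real C * ((1 + t\<^sup>2) powr (- of_real a) *
       (k2 * (Qf t powr of_real (2 * s - 1) * hg (A - c1 + 1) (B - c1 + 1) (2 - c1) (Rf t)))))"
  have h1: "\<Phi>1 holomorphic_on U2" unfolding \<Phi>1_def
    by (intro holomorphic_intros hg_comp[OF pos(1,2,4) U2_facts(3,4)]) (use U2_facts(7) in auto)
  have h2: "\<Phi>2 holomorphic_on U2" unfolding \<Phi>2_def
    by (intro holomorphic_intros hg_comp[OF pos(6,7,8) U2_facts(3,4)] U2_facts(5)) (use U2_facts(7,6) in auto)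
  have sm1: "smooth_on (\<lambda>x. Re (\<Phi>1 (of_real x))) {0<..<sqrt 2}"
    by (rule smooth_from_holo[OF h1 U2_facts(1)]) (use U2_facts(2) in auto)
  have sm2: "smooth_on (\<lambda>x. Re (\<Phi>2 (of_real x))) {0<..<sqrt 2}"
    by (rule smooth_from_holo[OF h2 U2_facts(1)]) (use U2_facts(2) in auto)
  have eq: "Phi N s t = Re (\<Phi>1 (of_real t)) + K s (1 - t) * Re (\<Phi>2 (of_real t))" if t: "t \<in> {0<..<1}" for t
  proof -
    define r where "r = ((1 - t\<^sup>2) / (1 + t\<^sup>2))\<^sup>2"
    define q where "q = (1 + t) / (1 + t\<^sup>2)"
    have t1: "0 < t" "t < 1" using t by auto
    note rf = r_facts[OF t1, folded r_def q_def]
    have tt: "\<bar>t\<bar> < 1" using t1 by simp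
    have p: "1 + t\<^sup>2 > 0" by (simp add: add_pos_nonneg)
    have P: "(1 + (complex_of_real t)\<^sup>2) powr (- complex_of_real a) = of_real ((1 + t\<^sup>2) powr (- a))"
    proof -
      have "(1 + (complex_of_real t)\<^sup>2) = of_real (1 + t\<^sup>2)" by simp
      then show ?thesis using powr_of_real[of "1 + t\<^sup>2" "- a"] p by simp
    qed
    have R: "Rf (of_real t) = of_real r" unfolding Rf_def r_def by simp
    have Qp: "Qf (of_real t) powr of_real (2 * s - 1) = of_real (q powr (2 * s - 1))"
    proof -
      have "Qf (of_real t) = of_real q" unfolding Qf_def q_def by simp
      then show ?thesis using powr_of_real[of q "2 * s - 1"] rf(4) by simp
    qed
    have rin: "complex_of_real r \<in> ball (1/2) (1/2)"
    proof -
      have "\<bar>1/2 - r\<bar> < 1/2" using rf(2,3) abs_less_iff[of "1/2 - r" "1/2"] by linarith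
      moreover have "dist (1/2) (complex_of_real r) = \<bar>1/2 - r\<bar>"
      proof -
        have "(1/2 :: complex) - complex_of_real r = complex_of_real (1/2 - r)" by simp
        then show ?thesis by (simp only: dist_norm norm_of_real)
      qed
      ultimately show ?thesis by simp
    qed
    have rp: "complex_of_real r powr (1 - of_real c1) = of_real ((1 - t) powr (2 * s - 1) * q powr (2 * s - 1))"
    proof -
      have "1 - complex_of_real c1 = of_real (s - 1/2)" unfolding c1v by simp
      then have "complex_of_real r powr (1 - of_real c1) = of_real (r powr (s - 1/2))"
        using powr_of_real[of r "s - 1/2"] rf(2) by simp
      also have "r powr (s - 1/2) = (1 - t) powr (2 * s - 1) * q powr (2 * s - 1)"
        using rf(5)[of "s - 1/2"] by (simp add: algebra_simps)
      finally show ?thesis .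
    qed
    have Kv: "K s (1 - t) = (1 - t) powr (2 * s - 1)" unfolding K_def using s(3) t1 by simp
    have w: "complex_of_real ((2 * t / (1 + t\<^sup>2))\<^sup>2) = 1 - of_real r" using rf(1) by simp
    have "Phi N s t = C * (1 + t\<^sup>2) powr (- a) * Re (hg A B G (of_real ((2 * t / (1 + t\<^sup>2))\<^sup>2)))"
      using Phi_formula[OF N aN tt] by (simp add: C_def a_def A_def B_def G_def)
    also have "\<dots> = C * (1 + t\<^sup>2) powr (- a) * Re (hg A B G (1 - of_real r))" unfolding w ..
    also have "hg A B G (1 - of_real r) = k1 * hg A B c1 (of_real r) +
        k2 * (of_real ((1 - t) powr (2 * s - 1) * q powr (2 * s - 1)) * hg (A - c1 + 1) (B - c1 + 1) (2 - c1) (of_real r))"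
      using kk[OF rin] unfolding rp .
    also have "C * (1 + t\<^sup>2) powr (- a) * Re (k1 * hg A B c1 (of_real r) +
        k2 * (of_real ((1 - t) powr (2 * s - 1) * q powr (2 * s - 1)) * hg (A - c1 + 1) (B - c1 + 1) (2 - c1) (of_real r)))
      = Re (\<Phi>1 (of_real t)) + K s (1 - t) * Re (\<Phi>2 (of_real t))"
      unfolding \<Phi>1_def \<Phi>2_def P R Qp Kv by (rule re_alg)
    finally show ?thesis .
  qed
  show ?thesis using sm1 sm2 eq by blast
qed

lemma re_alg_log:
  fixes k1 y1 k2 h :: complex and c p L lq :: real
  shows "c * p * Re (k1 * y1 + k2 * (y1 * of_real (2 * L + 2 * lq) + h)) =
     Re (of_real c * (of_real p * (k1 * y1 + k2 * (y1 * (2 * of_real lq) + h)))) + L * Re (of_real c * (of_real p * (k2 * (2 * y1))))"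
proof -
  have e: "\<And>x z. Re (complex_of_real x * z) = x * Re z" by simp
  have "k1 * y1 + k2 * (y1 * of_real (2 * L + 2 * lq) + h) = (k1 * y1 + k2 * (y1 * (2 * of_real lq) + h)) + of_real L * (k2 * (2 * y1))"
    by (simp add: algebra_simps)
  then show ?thesis by (simp only: e plus_complex.sel) (simp add: algebra_simps)
qed

lemma part_ii_log:
  fixes N :: nat and s :: real
  assumes N: "N \<ge> 2" and s: "s = 1/2" and aN: "2 * s < real N"
  shows "\<exists>\<phi>1 \<phi>2 :: real \<Rightarrow> real.
               smooth_on \<phi>1 {0<..<sqrt 2} \<and> smooth_on \<phi>2 {0<..<sqrt 2} \<and>
               (\<forall>t\<in>{0<..<1}. Phi N s t = \<phi>1 t + K s (1 - t) * \<phi>2 t)"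
proof -
  define a where "a = real N / 2 - s"
  define C where "C = sphere_measure (N - 1) * mom (N - 2) 0"
  define A where "A = a / 2"
  define B where "B = (a + 1) / 2"
  define G where "G = real N / 2"
  have a: "a > 0" using aN unfolding a_def by simp
  have pos: "A > 0" "B > 0" using a unfolding A_def B_def by auto
  have AB: "A + B = G" unfolding A_def B_def G_def a_def s by (simp add: field_simps)
  obtain k1 k2 where kk: "\<And>r. r \<in> ball (1/2) (1/2) \<Longrightarrow> hg A B G (1 - r) =
     k1 * hg A B 1 r + k2 * (hg A B 1 r * Ln r + hl A B r)"
    using connection_log[OF AB pos] by blast
  define \<Phi>1 where "\<Phi>1 = (\<lambda>t. of_real C * ((1 + t\<^sup>2) powr (- of_real a) *
      (k1 * hg A B 1 (Rf t) + k2 * (hg A B 1 (Rf t) * (2 * Ln (Qf t)) + hl A B (Rf t)))))"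
  define \<Phi>2 where "\<Phi>2 = (\<lambda>t. of_real C * ((1 + t\<^sup>2) powr (- of_real a) * (k2 * (2 * hg A B 1 (Rf t)))))"
  have p1: "(1::real) > 0" by simp
  have h1: "\<Phi>1 holomorphic_on U2" unfolding \<Phi>1_def
    by (intro holomorphic_intros hg_comp[OF pos p1 U2_facts(3,4)] hl_comp[OF pos U2_facts(3,4)] U2_facts(5))
       (use U2_facts(7,6) in auto)
  have h2: "\<Phi>2 holomorphic_on U2" unfolding \<Phi>2_def
    by (intro holomorphic_intros hg_comp[OF pos p1 U2_facts(3,4)]) (use U2_facts(7) in auto)
  have sm1: "smooth_on (\<lambda>x. Re (\<Phi>1 (of_real x))) {0<..<sqrt 2}"
    by (rule smooth_from_holo[OF h1 U2_facts(1)]) (use U2_facts(2) in auto)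
  have sm2: "smooth_on (\<lambda>x. Re (\<Phi>2 (of_real x))) {0<..<sqrt 2}"
    by (rule smooth_from_holo[OF h2 U2_facts(1)]) (use U2_facts(2) in auto)
  have eq: "Phi N s t = Re (\<Phi>1 (of_real t)) + K s (1 - t) * Re (\<Phi>2 (of_real t))" if t: "t \<in> {0<..<1}" for t
  proof -
    define r where "r = ((1 - t\<^sup>2) / (1 + t\<^sup>2))\<^sup>2"
    define q where "q = (1 + t) / (1 + t\<^sup>2)"
    have t1: "0 < t" "t < 1" using t by auto
    note rf = r_facts[OF t1, folded r_def q_def]
    have tt: "\<bar>t\<bar> < 1" using t1 by simp
    have p: "1 + t\<^sup>2 > 0" by (simp add: add_pos_nonneg)
    have P: "(1 + (complex_of_real t)\<^sup>2) powr (- complex_of_real a) = of_real ((1 + t\<^sup>2) powr (- a))"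
    proof -
      have "(1 + (complex_of_real t)\<^sup>2) = of_real (1 + t\<^sup>2)" by simp
      then show ?thesis using powr_of_real[of "1 + t\<^sup>2" "- a"] p by simp
    qed
    have R: "Rf (of_real t) = of_real r" unfolding Rf_def r_def by simp
    have LQ: "Ln (Qf (of_real t)) = of_real (ln q)"
    proof -
      have "Qf (of_real t) = of_real q" unfolding Qf_def q_def by simp
      then show ?thesis using Ln_of_real[OF rf(4)] by simp
    qed
    have rin: "complex_of_real r \<in> ball (1/2) (1/2)"
    proof -
      have "\<bar>1/2 - r\<bar> < 1/2" using rf(2,3) abs_less_iff[of "1/2 - r" "1/2"] by linarith
      moreover have "dist (1/2) (complex_of_real r) = \<bar>1/2 - r\<bar>"
      proof -
        have "(1/2 :: complex) - complex_of_real r = complex_of_real (1/2 - r)" by simp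
        then show ?thesis by (simp only: dist_norm norm_of_real)
      qed
      ultimately show ?thesis by simp
    qed
    have Lr: "Ln (complex_of_real r) = of_real (2 * ln (1 - t) + 2 * ln q)"
      using Ln_of_real[OF rf(2)] rf(6) by simp
    have Kv: "K s (1 - t) = ln (1 - t)" unfolding K_def using s t1 by simp
    have w: "complex_of_real ((2 * t / (1 + t\<^sup>2))\<^sup>2) = 1 - of_real r" using rf(1) by simp
    have "Phi N s t = C * (1 + t\<^sup>2) powr (- a) * Re (hg A B G (of_real ((2 * t / (1 + t\<^sup>2))\<^sup>2)))"
      using Phi_formula[OF N aN tt] by (simp add: C_def a_def A_def B_def G_def)
    also have "\<dots> = C * (1 + t\<^sup>2) powr (- a) * Re (hg A B G (1 - of_real r))" unfolding w ..
    also have "hg A B G (1 - of_real r) = k1 * hg A B 1 (of_real r) +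
        k2 * (hg A B 1 (of_real r) * of_real (2 * ln (1 - t) + 2 * ln q) + hl A B (of_real r))"
      using kk[OF rin] unfolding Lr .
    also have "C * (1 + t\<^sup>2) powr (- a) * Re (k1 * hg A B 1 (of_real r) +
        k2 * (hg A B 1 (of_real r) * of_real (2 * ln (1 - t) + 2 * ln q) + hl A B (of_real r)))
      = Re (\<Phi>1 (of_real t)) + K s (1 - t) * Re (\<Phi>2 (of_real t))"
      unfolding \<Phi>1_def \<Phi>2_def P R LQ Kv by (rule re_alg_log)
    finally show ?thesis .
  qed
  show ?thesis using sm1 sm2 eq by blast
qed

lemma part_ii:
  fixes N :: nat and s :: real
  assumes N: "N \<ge> 2" and s: "0 < s" "s \<le> 1" and aN: "2 * s < real N"
  shows "\<exists>\<phi>1 \<phi>2 :: real \<Rightarrow> real.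
               smooth_on \<phi>1 {0<..<sqrt 2} \<and> smooth_on \<phi>2 {0<..<sqrt 2} \<and>
               (\<forall>t\<in>{0<..<1}. Phi N s t = \<phi>1 t + K s (1 - t) * \<phi>2 t)"
proof (cases "s = 1/2")
  case True then show ?thesis using part_ii_log[OF N True aN] by blast
next
  case False then show ?thesis using part_ii_nonlog[OF N s False aN] by blast
qed


theorem proposition5p1:
  fixes N :: nat and s :: real
  assumes "N \<ge> 2" and "0 < s" and "s \<le> 1" and "2 * s < real N"
  shows "real_analytic_on (Phi N s) {-1<..<1}
         \<and> (\<forall>t\<in>{-1<..<1}. Phi N s t > 0)
         \<and> (\<exists>\<phi>1 \<phi>2 :: real \<Rightarrow> real.
               smooth_on \<phi>1 {0<..<sqrt 2} \<and> smooth_on \<phi>2 {0<..<sqrt 2} \<and>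
               (\<forall>t\<in>{0<..<1}. Phi N s t = \<phi>1 t + K s (1 - t) * \<phi>2 t))
         \<and> (\<forall>t>0. Phi N s (1 / t) = t powr (real N - 2 * s) * Phi N s t)"
  using part_i[OF assms] part_ii[OF assms] Phi_inversion by blast

end
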